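(* For any fixed positive integer $R$, for each $n$ there exists a sequence of reals $S=(\alpha_0,\ldots,\alpha_{M-1})$ such that every permutation $\sigma$ of $\{1,\ldots,n\}$ differs by at most $R$ transpositions from the order type of some consecutive $n$-word $(\alpha_i,\ldots,\alpha_{i+n-1})$ (indices mod $M$) of $S$, and $$\frac{n!}{n^{2R}}\prec M\prec\frac{n!\log n}{n^{2R}}.$$
   Context: Two sequences $(a_1,\ldots,a_k),(b_1,\ldots,b_k)\in\mathbb{R}^k$ have the same order type if $a_i<a_j$ iff $b_i<b_j$ for all $1\le i,j\le k$; the order type of a sequence of distinct reals is identified with the corresponding permutation of $\{1,\ldots,n\}$. The distance between permutations is the minimum number of transpositions needed to transform one into the other. $f\prec g$ means there is $c>0$ with $f(n)\le c\,g(n)$ for all sufficiently large $n$. *)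

theory Defs
  imports "HOL-Analysis.Analysis" "HOL-Combinatorics.Combinatorics"
begin

text \<open>Permutations of {1..n} are represented (0-indexed) as permutations of {0..<n}.\<close>

definition perm_dist :: "nat \<Rightarrow> (nat \<Rightarrow> nat) \<Rightarrow> (nat \<Rightarrow> nat) \<Rightarrow> nat" where
  "perm_dist n \<sigma> \<tau> = (LEAST k. \<exists>ts. length ts = k \<and>
      (\<forall>(a,b)\<in>set ts. a < n \<and> b < n \<and> a \<noteq> b) \<and>
      \<sigma> = foldr (\<lambda>(a,b) f. Transposition.transpose a b \<circ> f) ts \<tau>)"

text \<open>Order type of (w 0, ..., w (n-1)) (assumed distinct): position j goes to its rank.\<close>
definition order_type :: "nat \<Rightarrow> (nat \<Rightarrow> real) \<Rightarrow> (nat \<Rightarrow> nat)" where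
  "order_type n w = (\<lambda>j. if j < n then card {k. k < n \<and> w k < w j} else j)"

definition cyc_word :: "nat \<Rightarrow> (nat \<Rightarrow> real) \<Rightarrow> nat \<Rightarrow> nat \<Rightarrow> real" where
  "cyc_word M S i = (\<lambda>j. S ((i + j) mod M))"

definition R_covers :: "nat \<Rightarrow> nat \<Rightarrow> nat \<Rightarrow> (nat \<Rightarrow> real) \<Rightarrow> bool" where
  "R_covers R n M S \<longleftrightarrow> (\<forall>\<sigma>. \<sigma> permutes {0..<n} \<longrightarrow>
     (\<exists>i<M. inj_on (cyc_word M S i) {0..<n} \<and>
            perm_dist n \<sigma> (order_type n (cyc_word M S i)) \<le> R))"

end

theory Submission
  imports Defs
begin

definition pat :: "'a::linorder list \<Rightarrow> nat \<Rightarrow> nat" where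
  "pat ys = (\<lambda>p. if p < length ys then card {q. q < length ys \<and> ys!q < ys!p} else p)"

lemma pat_lt_iff:
  assumes "distinct xs" "a < length xs" "b < length xs"
  shows "pat xs a < pat xs b \<longleftrightarrow> xs!a < xs!b"
proof
  assume "xs!a < xs!b"
  then have "{q. q < length xs \<and> xs!q < xs!a} \<subset> {q. q < length xs \<and> xs!q < xs!b}"
    using assms by auto
  then show "pat xs a < pat xs b" using assms by (simp add: pat_def psubset_card_mono)
next
  assume h: "pat xs a < pat xs b"
  show "xs!a < xs!b"
  proof (rule ccontr)
    assume "\<not> xs!a < xs!b"
    then have "{q. q < length xs \<and> xs!q < xs!b} \<subseteq> {q. q < length xs \<and> xs!q < xs!a}"
      by auto
    then have "pat xs b \<le> pat xs a" using assms by (simp add: pat_def card_mono)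
    with h show False by simp
  qed
qed

lemma pat_less:
  assumes "p < length xs" shows "pat xs p < length xs"
proof -
  have "{q. q < length xs \<and> xs!q < xs!p} \<subseteq> {0..<length xs} - {p}" by auto
  then have "card {q. q < length xs \<and> xs!q < xs!p} \<le> card ({0..<length xs} - {p})"
    by (intro card_mono) auto
  then show ?thesis using assms by (simp add: pat_def)
qed

lemma pat_out: "p \<ge> length xs \<Longrightarrow> pat xs p = p"
  by (simp add: pat_def)

lemma pat_inj:
  assumes "distinct xs" shows "inj_on (pat xs) {0..<length xs}"
proof (rule inj_onI)
  fix a b assume ab: "a \<in> {0..<length xs}" "b \<in> {0..<length xs}" "pat xs a = pat xs b"
  show "a = b"
  proof (rule ccontr)
    assume "a \<noteq> b"
    then have "xs!a \<noteq> xs!b" using assms ab by (simp add: nth_eq_iff_index_eq)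
    then have "xs!a < xs!b \<or> xs!b < xs!a" by auto
    then show False using pat_lt_iff[OF assms, of a b] pat_lt_iff[OF assms, of b a] ab by auto
  qed
qed

lemma pat_permutes:
  assumes "distinct xs" shows "pat xs permutes {0..<length xs}"
proof (rule bij_imp_permutes)
  have "pat xs ` {0..<length xs} \<subseteq> {0..<length xs}" using pat_less by auto
  then show "bij_betw (pat xs) {0..<length xs} {0..<length xs}"
    using pat_inj[OF assms] by (simp add: bij_betw_def endo_inj_surj)
next
  fix x assume "x \<notin> {0..<length xs}" then show "pat xs x = x" by (simp add: pat_def)
qed

lemma pat_map_mono:
  assumes "\<And>x y. x \<in> set xs \<Longrightarrow> y \<in> set xs \<Longrightarrow> f x < f y \<longleftrightarrow> x < y"
  shows "pat (map f xs) = pat xs"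
proof
  fix p
  show "pat (map f xs) p = pat xs p"
  proof (cases "p < length xs")
    case True
    have "{q. q < length xs \<and> map f xs!q < map f xs!p} = {q. q < length xs \<and> xs!q < xs!p}"
      using assms True by auto
    then show ?thesis using True by (simp add: pat_def)
  qed (simp add: pat_def)
qed

definition Pl :: "nat \<Rightarrow> nat list set" where
  "Pl N = permutations_of_set {0..<N}"

lemma Pl_iff: "xs \<in> Pl N \<longleftrightarrow> distinct xs \<and> set xs = {0..<N}"
  by (auto simp: Pl_def permutations_of_set_def)

lemma Pl_length: "xs \<in> Pl N \<Longrightarrow> length xs = N"
  by (simp add: Pl_def length_finite_permutations_of_set)

lemma card_Pl: "card (Pl N) = fact N"
  by (simp add: Pl_def)

lemma finite_Pl: "finite (Pl N)" by (simp add: Pl_def)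

lemma card_less_val:
  assumes "distinct xs" "set xs = {0..<length xs}" "p < length xs"
  shows "card {q. q < length xs \<and> xs!q < xs!p} = xs!p"
proof -
  have "(\<lambda>q. xs!q) ` {q. q < length xs \<and> xs!q < xs!p} = {y \<in> set xs. y < xs!p}"
    by (auto simp: in_set_conv_nth)
  moreover have "inj_on (\<lambda>q. xs!q) {q. q < length xs \<and> xs!q < xs!p}"
    using assms by (intro inj_on_nth) auto
  moreover have "{y \<in> set xs. y < xs!p} = {0..<xs!p}"
    using assms nth_mem[OF assms(3)] by auto
  ultimately show ?thesis by (metis card_atLeastLessThan card_image diff_zero)
qed

lemma pat_Pl: "xs \<in> Pl N \<Longrightarrow> pat xs = (\<lambda>p. if p < N then xs!p else p)"
proof -
  assume a: "xs \<in> Pl N"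
  then have l: "length xs = N" by (rule Pl_length)
  show ?thesis using card_less_val[of xs] a l by (auto simp: pat_def Pl_iff intro!: ext)
qed

lemma pat_Pl_nth: "xs \<in> Pl N \<Longrightarrow> p < N \<Longrightarrow> pat xs p = xs!p"
  by (simp add: pat_Pl)


lemma pat_card_set:
  assumes "distinct xs" "p < length xs"
  shows "pat xs p = card {y \<in> set xs. y < xs!p}"
proof -
  have "(\<lambda>q. xs!q) ` {q. q < length xs \<and> xs!q < xs!p} = {y \<in> set xs. y < xs!p}"
    by (auto simp: in_set_conv_nth)
  moreover have I: "inj_on (\<lambda>q. xs!q) {q. q < length xs \<and> xs!q < xs!p}"
    using assms by (intro inj_on_nth) auto
  moreover have "pat xs p = card {q. q < length xs \<and> xs!q < xs!p}"
    using assms by (simp add: pat_def)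
  ultimately show ?thesis using card_image[OF I] by simp
qed

lemma card_below_strict:
  fixes S :: "'a::linorder set"
  assumes "finite S" "a \<in> S" "a < b"
  shows "card {y \<in> S. y < a} < card {y \<in> S. y < b}"
proof (rule psubset_card_mono)
  show "finite {y \<in> S. y < b}" using assms by simp
  show "{y \<in> S. y < a} \<subset> {y \<in> S. y < b}"
  proof (rule psubsetI)
    show "{y \<in> S. y < a} \<subseteq> {y \<in> S. y < b}" using assms(3) by auto
    have "a \<in> {y \<in> S. y < b}" using assms by simp
    moreover have "a \<notin> {y \<in> S. y < a}" by simp
    ultimately show "{y \<in> S. y < a} \<noteq> {y \<in> S. y < b}" by metis
  qed
qed

lemma card_below_inj:
  fixes S :: "'a::linorder set"
  assumes "finite S" "a \<in> S" "b \<in> S" "card {y \<in> S. y < a} = card {y \<in> S. y < b}"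
  shows "a = b"
  using card_below_strict[OF assms(1,2), of b] card_below_strict[OF assms(1,3), of a] assms(4)
  by (cases a b rule: linorder_cases) auto

lemma pat_unique:
  fixes xs ys :: "'a::linorder list"
  assumes "distinct xs" "distinct ys" "set xs = set ys" "pat xs = pat ys"
  shows "xs = ys"
proof -
  have l: "length xs = length ys" using assms by (metis distinct_card)
  show ?thesis
  proof (rule nth_equalityI)
    show "length xs = length ys" by (rule l)
    fix p assume p: "p < length xs"
    have "card {y \<in> set xs. y < xs!p} = card {y \<in> set xs. y < ys!p}"
      using pat_card_set[OF assms(1) p] pat_card_set[OF assms(2), of p] p l assms(3,4) by simp
    then show "xs!p = ys!p" using card_below_inj[of "set xs" "xs!p" "ys!p"] p l assms(3)
      by (metis List.finite_set nth_mem)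
  qed
qed



definition Pat :: "nat \<Rightarrow> (nat \<Rightarrow> nat) set" where
  "Pat n = {\<tau>. \<tau> permutes {0..<n}}"

lemma card_Pat: "card (Pat n) = fact n"
  unfolding Pat_def by (rule card_permutations) auto

lemma finite_Pat: "finite (Pat n)"
  unfolding Pat_def by (simp add: finite_permutations)

definition reord :: "'a::linorder set \<Rightarrow> (nat \<Rightarrow> nat) \<Rightarrow> 'a list" where
  "reord A \<tau> = map (\<lambda>i. sorted_list_of_set A ! \<tau> i) [0..<card A]"

lemma sorted_nth_iff:
  fixes s :: "'a::linorder list"
  assumes "sorted_wrt (<) s" "x < length s" "y < length s"
  shows "s!x < s!y \<longleftrightarrow> x < y"
proof
  assume "x < y" then show "s!x < s!y" using assms sorted_wrt_nth_less by blast
next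
  assume h: "s!x < s!y"
  show "x < y"
  proof (rule ccontr)
    assume "\<not> x < y"
    then have "y < x \<or> y = x" by auto
    then show False
    proof
      assume "y < x" then have "s!y < s!x" using assms sorted_wrt_nth_less by blast
      then show False using h less_asym by blast
    qed (use h in simp)
  qed
qed

lemma map_perm_Pl:
  assumes "\<tau> permutes {0..<n}" shows "map \<tau> [0..<n] \<in> Pl n"
proof -
  have "inj_on \<tau> {0..<n}" using assms by (meson permutes_inj_on)
  moreover have "\<tau> ` {0..<n} = {0..<n}" using assms by (simp add: permutes_image)
  ultimately show ?thesis by (auto simp: Pl_iff distinct_map)
qed

lemma pat_map_perm:
  assumes "\<tau> permutes {0..<n}" shows "pat (map \<tau> [0..<n]) = \<tau>"
proof -
  have "pat (map \<tau> [0..<n]) = (\<lambda>p. if p < n then map \<tau> [0..<n] ! p else p)"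
    by (rule pat_Pl[OF map_perm_Pl[OF assms]])
  also have "\<dots> = \<tau>" using assms by (auto simp: permutes_def intro!: ext)
  finally show ?thesis .
qed

lemma reord_props:
  fixes A :: "'a::linorder set"
  assumes "finite A" "\<tau> permutes {0..<card A}"
  shows "distinct (reord A \<tau>)" "set (reord A \<tau>) = A" "pat (reord A \<tau>) = \<tau>"
    "length (reord A \<tau>) = card A"
proof -
  let ?s = "sorted_list_of_set A"
  have ls: "length ?s = card A" by simp
  have ss: "sorted_wrt (<) ?s" by simp
  have eq: "reord A \<tau> = map (\<lambda>i. ?s ! i) (map \<tau> [0..<card A])"
    by (simp add: reord_def)
  have P: "map \<tau> [0..<card A] \<in> Pl (card A)" by (rule map_perm_Pl[OF assms(2)])
  then have st: "set (map \<tau> [0..<card A]) = {0..<card A}" and dt: "distinct (map \<tau> [0..<card A])"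
    by (auto simp: Pl_iff)
  have inj: "inj_on (\<lambda>i. ?s ! i) {0..<card A}"
    by (intro inj_on_nth) (auto simp: ls)
  have it: "inj_on \<tau> {0..<card A}" using dt by (simp add: distinct_map)
  have "inj_on ((\<lambda>i. ?s ! i) \<circ> \<tau>) {0..<card A}"
    by (rule comp_inj_on[OF it]) (use inj st in simp)
  then show "distinct (reord A \<tau>)" unfolding eq using dt by (simp add: distinct_map)
  have im: "(\<lambda>i. ?s!i) ` {0..<card A} = set ?s" by (auto simp: in_set_conv_nth ls)
  have st': "\<tau> ` {0..<card A} = {0..<card A}" using st by simp
  have "set (reord A \<tau>) = (\<lambda>i. ?s!i) ` (\<tau> ` {0..<card A})" unfolding eq by (simp add: image_image)
  also have "\<dots> = A" unfolding st' im using assms(1) by simp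
  finally show "set (reord A \<tau>) = A" .
  have mono: "\<And>x y. x \<in> set (map \<tau> [0..<card A]) \<Longrightarrow> y \<in> set (map \<tau> [0..<card A])
     \<Longrightarrow> ?s ! x < ?s ! y \<longleftrightarrow> x < y"
    unfolding st using sorted_nth_iff[OF ss] ls by simp
  have "pat (map (\<lambda>i. ?s ! i) (map \<tau> [0..<card A])) = pat (map \<tau> [0..<card A])"
    by (rule pat_map_mono[OF mono])
  then show "pat (reord A \<tau>) = \<tau>" unfolding eq using pat_map_perm[OF assms(2)] by simp
  show "length (reord A \<tau>) = card A" by (simp add: reord_def)
qed

lemma reord_reconstruct:
  fixes xs :: "'a::linorder list"
  assumes "distinct xs" shows "reord (set xs) (pat xs) = xs"
proof -
  have c: "card (set xs) = length xs" using assms by (simp add: distinct_card)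
  have pp: "pat xs permutes {0..<card (set xs)}" using pat_permutes[OF assms] c by simp
  show ?thesis using reord_props[OF _ pp] assms by (intro pat_unique) auto
qed



definition F :: "nat \<Rightarrow> nat \<Rightarrow> nat \<Rightarrow> (nat \<Rightarrow> nat) \<Rightarrow> nat list set" where
  "F L j l \<tau> = {xs \<in> Pl L. pat (take l (drop j xs)) = \<tau>}"

definition swp :: "nat \<Rightarrow> nat \<Rightarrow> (nat \<Rightarrow> nat) \<Rightarrow> nat list \<Rightarrow> nat list" where
  "swp j l \<tau> xs = take j xs @ reord (set (take l (drop j xs))) \<tau> @ drop (j+l) xs"

lemma split3: "take j xs @ take l (drop j xs) @ drop (j+l) xs = xs"
  by (metis add.commute append_take_drop_id drop_drop)

lemma swp_props:
  assumes "j + l \<le> L" "xs \<in> Pl L" "\<tau> permutes {0..<l}"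
  shows "swp j l \<tau> xs \<in> F L j l \<tau>"
    "take l (drop j (swp j l \<tau> xs)) = reord (set (take l (drop j xs))) \<tau>"
    "take j (swp j l \<tau> xs) = take j xs" "drop (j+l) (swp j l \<tau> xs) = drop (j+l) xs"
proof -
  let ?w = "take l (drop j xs)"
  have len: "length xs = L" using assms Pl_length by auto
  have dx: "distinct xs" and sx: "set xs = {0..<L}" using assms by (auto simp: Pl_iff)
  have lw: "length ?w = l" using len assms by simp
  have dw: "distinct ?w" using dx by (simp add: distinct_drop distinct_take)
  have cw: "card (set ?w) = l" using dw lw by (simp add: distinct_card)
  have R: "distinct (reord (set ?w) \<tau>)" "set (reord (set ?w) \<tau>) = set ?w"
     "pat (reord (set ?w) \<tau>) = \<tau>" "length (reord (set ?w) \<tau>) = l"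
    using reord_props[of "set ?w" \<tau>] assms(3) cw by auto
  have lt: "length (take j xs) = j" using len assms by simp
  show t2: "take l (drop j (swp j l \<tau> xs)) = reord (set ?w) \<tau>"
    unfolding swp_def using lt R(4) by simp
  show "take j (swp j l \<tau> xs) = take j xs" unfolding swp_def using lt by simp
  show "drop (j+l) (swp j l \<tau> xs) = drop (j+l) xs" unfolding swp_def using lt R(4) by simp
  have dd: "distinct (take j xs @ ?w @ drop (j+l) xs)" using dx split3[of j xs l] by simp
  have d: "distinct (swp j l \<tau> xs)" unfolding swp_def using dd R(1,2) by auto
  have s: "set (swp j l \<tau> xs) = set xs" unfolding swp_def using R(2)
    by (metis set_append split3)
  show "swp j l \<tau> xs \<in> F L j l \<tau>" unfolding F_def using d s sx t2 R(3) by (simp add: Pl_iff)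
qed

lemma swp_back:
  assumes "j + l \<le> L" "xs \<in> F L j l \<tau>" "\<tau>' permutes {0..<l}"
  shows "swp j l \<tau> (swp j l \<tau>' xs) = xs"
proof -
  have xs: "xs \<in> Pl L" and pt: "pat (take l (drop j xs)) = \<tau>" using assms by (auto simp: F_def)
  have dx: "distinct xs" using xs by (simp add: Pl_iff)
  have dw: "distinct (take l (drop j xs))" using dx by (simp add: distinct_drop distinct_take)
  let ?y = "swp j l \<tau>' xs"
  have "set (take l (drop j ?y)) = set (take l (drop j xs))"
    using swp_props(2)[OF assms(1) xs assms(3)] reord_props(2)[of "set (take l (drop j xs))" \<tau>']
      assms(3) dw Pl_length[OF xs] assms(1) by (simp add: distinct_card)
  then have "reord (set (take l (drop j ?y))) \<tau> = take l (drop j xs)"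
    using reord_reconstruct[OF dw] pt by simp
  then show ?thesis unfolding swp_def[of j l \<tau>]
    using swp_props(3,4)[OF assms(1) xs assms(3)] split3[of j xs l] by simp
qed



lemma F_card_eq:
  assumes "j + l \<le> L" "\<tau> permutes {0..<l}" "\<tau>' permutes {0..<l}"
  shows "card (F L j l \<tau>) \<le> card (F L j l \<tau>')"
proof (rule card_inj_on_le)
  show "inj_on (swp j l \<tau>') (F L j l \<tau>)"
    by (rule inj_on_inverseI[where g = "swp j l \<tau>"]) (use swp_back assms in blast)
  show "swp j l \<tau>' ` F L j l \<tau> \<subseteq> F L j l \<tau>'"
    using swp_props(1)[OF assms(1) _ assms(3)] by (auto simp: F_def)
  show "finite (F L j l \<tau>')" using finite_Pl by (simp add: F_def)
qed

lemma pat_seg_Pat: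
  assumes "j + l \<le> L" "xs \<in> Pl L" shows "pat (take l (drop j xs)) \<in> Pat l"
proof -
  have "distinct (take l (drop j xs))" using assms by (simp add: Pl_iff distinct_drop distinct_take)
  moreover have "length (take l (drop j xs)) = l" using assms Pl_length by auto
  ultimately show ?thesis using pat_permutes unfolding Pat_def by fastforce
qed

lemma fiber_card:
  assumes "j + l \<le> L" "\<tau> \<in> Pat l"
  shows "fact l * card (F L j l \<tau>) = fact L"
proof -
  have eq: "\<And>\<sigma>. \<sigma> \<in> Pat l \<Longrightarrow> card (F L j l \<sigma>) = card (F L j l \<tau>)"
  proof -
    fix \<sigma> assume "\<sigma> \<in> Pat l"
    then show "card (F L j l \<sigma>) = card (F L j l \<tau>)"
      using F_card_eq[OF assms(1), of \<sigma> \<tau>] F_card_eq[OF assms(1), of \<tau> \<sigma>] assms(2)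
      unfolding Pat_def by simp
  qed
  have U: "Pl L = (\<Union>\<sigma>\<in>Pat l. F L j l \<sigma>)"
    using pat_seg_Pat[OF assms(1)] by (auto simp: F_def)
  have "card (Pl L) = (\<Sum>\<sigma>\<in>Pat l. card (F L j l \<sigma>))"
    unfolding U by (rule card_UN_disjoint) (auto simp: finite_Pat F_def finite_Pl)
  also have "\<dots> = fact l * card (F L j l \<tau>)" using eq card_Pat by simp
  finally show ?thesis by (simp add: card_Pl)
qed



definition mono_inv :: "(nat list \<Rightarrow> bool) \<Rightarrow> bool" where
  "mono_inv C \<longleftrightarrow> (\<forall>zs f. distinct zs \<longrightarrow> (\<forall>x\<in>set zs. \<forall>y\<in>set zs. f x < f y \<longleftrightarrow> x < y)
      \<longrightarrow> C (map f zs) = C zs)"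

lemma seg_card:
  assumes "j + N \<le> L" "mono_inv C"
  shows "fact N * card {xs \<in> Pl L. C (take N (drop j xs))} = fact L * card {zs \<in> Pl N. C zs}"
proof -
  let ?T = "{\<tau> \<in> Pat N. C (map \<tau> [0..<N])}"
  have key: "C (take N (drop j xs)) \<longleftrightarrow> C (map (pat (take N (drop j xs))) [0..<N])"
    if xs: "xs \<in> Pl L" for xs
  proof -
    let ?w = "take N (drop j xs)"
    have dw: "distinct ?w" using xs by (simp add: Pl_iff distinct_drop distinct_take)
    have lw: "length ?w = N" using xs assms Pl_length by auto
    have cw: "card (set ?w) = N" using dw lw by (simp add: distinct_card)
    let ?s = "sorted_list_of_set (set ?w)"
    have "?w = reord (set ?w) (pat ?w)" using reord_reconstruct[OF dw] by simp
    also have "\<dots> = map (\<lambda>i. ?s ! i) (map (pat ?w) [0..<N])" by (simp add: reord_def cw)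
    finally have e: "?w = map (\<lambda>i. ?s ! i) (map (pat ?w) [0..<N])" .
    have pp: "pat ?w permutes {0..<N}" using pat_permutes[OF dw] lw by simp
    have P: "map (pat ?w) [0..<N] \<in> Pl N" by (rule map_perm_Pl[OF pp])
    have ls: "length ?s = N" using cw by simp
    have ss: "sorted_wrt (<) ?s" by simp
    have dP: "distinct (map (pat ?w) [0..<N])" and sP: "set (map (pat ?w) [0..<N]) = {0..<N}"
      using P by (auto simp: Pl_iff)
    have mono: "\<forall>x\<in>set (map (pat ?w) [0..<N]). \<forall>y\<in>set (map (pat ?w) [0..<N]). ?s ! x < ?s ! y \<longleftrightarrow> x < y"
      unfolding sP using sorted_nth_iff[OF ss] ls by simp
    have "C (map (\<lambda>i. ?s ! i) (map (pat ?w) [0..<N])) = C (map (pat ?w) [0..<N])"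
      using assms(2) dP mono unfolding mono_inv_def by blast
    then show ?thesis using e by simp
  qed
  have U: "{xs \<in> Pl L. C (take N (drop j xs))} = (\<Union>\<tau>\<in>?T. F L j N \<tau>)"
    using key pat_seg_Pat[OF assms(1)] by (auto simp: F_def)
  have "card {xs \<in> Pl L. C (take N (drop j xs))} = (\<Sum>\<tau>\<in>?T. card (F L j N \<tau>))"
    unfolding U by (rule card_UN_disjoint) (auto simp: finite_Pat F_def finite_Pl)
  then have "fact N * card {xs \<in> Pl L. C (take N (drop j xs))} = (\<Sum>\<tau>\<in>?T. fact N * card (F L j N \<tau>))"
    by (simp add: sum_distrib_left)
  also have "\<dots> = (\<Sum>\<tau>\<in>?T. fact L)" using fiber_card[OF assms(1)] by (intro sum.cong) auto
  also have "\<dots> = fact L * card ?T" by simp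
  also have "card ?T = card {zs \<in> Pl N. C zs}"
  proof (rule bij_betw_same_card[where f = "\<lambda>\<tau>. map \<tau> [0..<N]"])
    show "bij_betw (\<lambda>\<tau>. map \<tau> [0..<N]) ?T {zs \<in> Pl N. C zs}"
    proof (rule bij_betw_byWitness[where f' = pat])
      show "\<forall>a\<in>?T. pat (map a [0..<N]) = a" using pat_map_perm by (auto simp: Pat_def)
      show "\<forall>a'\<in>{zs \<in> Pl N. C zs}. map (pat a') [0..<N] = a'"
        using pat_Pl Pl_length by (auto intro!: nth_equalityI)
      show "(\<lambda>\<tau>. map \<tau> [0..<N]) ` ?T \<subseteq> {zs \<in> Pl N. C zs}"
        using map_perm_Pl by (auto simp: Pat_def)
      show "pat ` {zs \<in> Pl N. C zs} \<subseteq> ?T"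
      proof
        fix t assume "t \<in> pat ` {zs \<in> Pl N. C zs}"
        then obtain zs where zs: "zs \<in> Pl N" "C zs" "t = pat zs" by auto
        have "map (pat zs) [0..<N] = zs" using pat_Pl[OF zs(1)] Pl_length[OF zs(1)]
          by (auto intro!: nth_equalityI)
        moreover have "pat zs \<in> Pat N" using pat_permutes[of zs] zs Pl_length
          by (auto simp: Pat_def Pl_iff)
        ultimately show "t \<in> ?T" using zs by auto
      qed
    qed
  qed
  finally show ?thesis .
qed



definition valid :: "nat \<Rightarrow> (nat \<times> nat) list \<Rightarrow> bool" where
  "valid n ts \<longleftrightarrow> (\<forall>(a,b)\<in>set ts. a < n \<and> b < n \<and> a \<noteq> b)"

definition tr :: "(nat \<times> nat) list \<Rightarrow> (nat \<Rightarrow> nat) \<Rightarrow> (nat \<Rightarrow> nat)" where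
  "tr ts f = foldr (\<lambda>(a,b) f. Transposition.transpose a b \<circ> f) ts f"

definition Bl :: "nat \<Rightarrow> nat \<Rightarrow> (nat \<Rightarrow> nat) \<Rightarrow> (nat \<Rightarrow> nat) set" where
  "Bl n R \<sigma> = {\<tau>. \<exists>ts. length ts \<le> R \<and> valid n ts \<and> \<sigma> = tr ts \<tau>}"

lemma tr_Nil [simp]: "tr [] f = f" by (simp add: tr_def)
lemma tr_Cons [simp]: "tr ((a,b)#ts) f = Transposition.transpose a b \<circ> tr ts f"
  by (simp add: tr_def)
lemma tr_append: "tr (xs @ ys) f = tr xs (tr ys f)"
  by (simp add: tr_def)

lemma Ball_dist:
  assumes "\<tau> \<in> Bl n R \<sigma>" shows "perm_dist n \<sigma> \<tau> \<le> R"
proof -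
  obtain ts where ts: "length ts \<le> R" "valid n ts" "\<sigma> = tr ts \<tau>"
    using assms by (auto simp: Bl_def)
  have "perm_dist n \<sigma> \<tau> \<le> length ts"
    unfolding perm_dist_def
    by (rule Least_le) (use ts in \<open>auto simp: valid_def tr_def\<close>)
  then show ?thesis using ts by simp
qed

lemma tr_comp: "tr ts f = tr ts id \<circ> f"
  by (induction ts) (auto simp: comp_assoc)

lemma tr_rev: "tr ts (tr (rev ts) f) = f"
proof (induction ts arbitrary: f)
  case (Cons t ts)
  obtain a b where t: "t = (a,b)" by fastforce
  have "tr (rev (t#ts)) f = tr (rev ts) (Transposition.transpose a b \<circ> f)"
    by (simp add: tr_append t)
  then have "tr (t#ts) (tr (rev (t#ts)) f) = Transposition.transpose a b \<circ> (Transposition.transpose a b \<circ> f)"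
    using Cons.IH t by simp
  also have "\<dots> = f" by (simp add: comp_assoc[symmetric])
  finally show ?case .
qed simp

lemma tr_rev': "tr (rev ts) (tr ts f) = f"
  using tr_rev[of "rev ts"] by simp

definition Mv :: "(nat \<times> nat) list \<Rightarrow> nat set" where
  "Mv ts = fst ` set ts \<union> snd ` set ts"

lemma card_Mv: "card (Mv ts) \<le> 2 * length ts"
proof -
  have "card (Mv ts) \<le> card (fst ` set ts) + card (snd ` set ts)"
    unfolding Mv_def by (rule card_Un_le)
  also have "\<dots> \<le> card (set ts) + card (set ts)"
    by (intro add_mono card_image_le) auto
  also have "\<dots> \<le> 2 * length ts" using card_length[of ts] by simp
  finally show ?thesis .
qed

lemma tr_fix: "x \<notin> Mv ts \<Longrightarrow> tr ts id x = x"
  by (induction ts) (auto simp: Mv_def)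

lemma Ball_diff:
  assumes "\<tau> \<in> Bl n R \<sigma>" "inj_on \<tau> {0..<n}"
  shows "card {p \<in> {0..<n}. \<tau> p \<noteq> \<sigma> p} \<le> 2 * R"
proof -
  obtain ts where ts: "length ts \<le> R" "valid n ts" "\<sigma> = tr ts \<tau>"
    using assms by (auto simp: Bl_def)
  have s: "\<sigma> p = tr ts id (\<tau> p)" for p using ts(3) tr_comp[of ts \<tau>] by simp
  have "card {p \<in> {0..<n}. \<tau> p \<noteq> \<sigma> p} \<le> card (Mv ts)"
  proof (rule card_inj_on_le[where f = \<tau>])
    show "inj_on \<tau> {p \<in> {0..<n}. \<tau> p \<noteq> \<sigma> p}" using assms(2) by (rule inj_on_subset) auto
    show "\<tau> ` {p \<in> {0..<n}. \<tau> p \<noteq> \<sigma> p} \<subseteq> Mv ts" using s tr_fix by fastforce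
    show "finite (Mv ts)" by (simp add: Mv_def)
  qed
  also have "\<dots> \<le> 2 * R" using card_Mv[of ts] ts(1) by simp
  finally show ?thesis .
qed

lemma Ball_diff2:
  assumes "\<tau>1 \<in> Bl n R \<sigma>" "inj_on \<tau>1 {0..<n}" "\<tau>2 \<in> Bl n R \<sigma>" "inj_on \<tau>2 {0..<n}"
  shows "card {p \<in> {0..<n}. \<tau>1 p \<noteq> \<tau>2 p} \<le> 4 * R"
proof -
  have "{p \<in> {0..<n}. \<tau>1 p \<noteq> \<tau>2 p} \<subseteq> {p \<in> {0..<n}. \<tau>1 p \<noteq> \<sigma> p} \<union> {p \<in> {0..<n}. \<tau>2 p \<noteq> \<sigma> p}"
    by auto
  then have "card {p \<in> {0..<n}. \<tau>1 p \<noteq> \<tau>2 p} \<le> card ({p \<in> {0..<n}. \<tau>1 p \<noteq> \<sigma> p} \<union> {p \<in> {0..<n}. \<tau>2 p \<noteq> \<sigma> p})"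
    by (intro card_mono) auto
  also have "\<dots> \<le> card {p \<in> {0..<n}. \<tau>1 p \<noteq> \<sigma> p} + card {p \<in> {0..<n}. \<tau>2 p \<noteq> \<sigma> p}"
    by (rule card_Un_le)
  also have "\<dots> \<le> 4 * R" using Ball_diff[OF assms(1,2)] Ball_diff[OF assms(3,4)] by simp
  finally show ?thesis .
qed

lemma tr_Pat:
  assumes "\<sigma> \<in> Pat n" "valid n ts" shows "tr ts \<sigma> \<in> Pat n"
  using assms
proof (induction ts)
  case (Cons t ts)
  obtain a b where t: "t = (a,b)" by fastforce
  have "valid n ts" and ab: "a < n" "b < n" using Cons.prems t by (auto simp: valid_def)
  then have "tr ts \<sigma> permutes {0..<n}" using Cons by (simp add: Pat_def)
  moreover have "Transposition.transpose a b permutes {0..<n}" using ab by (intro permutes_swap_id) auto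
  ultimately have "Transposition.transpose a b \<circ> tr ts \<sigma> permutes {0..<n}"
    by (rule permutes_compose)
  then show ?case using t by (simp add: Pat_def o_def)
qed simp

lemma valid_rev: "valid n (rev ts) = valid n ts" by (simp add: valid_def)

lemma Ball_sub:
  "Bl n R \<sigma> \<subseteq> (\<lambda>ts. tr (rev ts) \<sigma>) ` {ts. set ts \<subseteq> {0..<n} \<times> {0..<n} \<and> length ts \<le> R}"
proof
  fix \<tau> assume "\<tau> \<in> Bl n R \<sigma>"
  then obtain ts where ts: "length ts \<le> R" "valid n ts" "\<sigma> = tr ts \<tau>"
    by (auto simp: Bl_def)
  have "\<tau> = tr (rev ts) \<sigma>" using ts(3) tr_rev' by simp
  moreover have "set ts \<subseteq> {0..<n} \<times> {0..<n}" using ts(2) by (auto simp: valid_def)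
  ultimately show "\<tau> \<in> (\<lambda>ts. tr (rev ts) \<sigma>) ` {ts. set ts \<subseteq> {0..<n} \<times> {0..<n} \<and> length ts \<le> R}"
    using ts(1) by blast
qed

lemma finite_Ball: "finite (Bl n R \<sigma>)"
proof (rule finite_subset[OF Ball_sub], rule finite_imageI)
  have "finite {ts. set ts \<subseteq> {0..<n} \<times> {0..<n} \<and> length ts \<le> R}"
    by (rule finite_lists_length_le) simp
  then show "finite {ts. set ts \<subseteq> {0..<n} \<times> {0..<n} \<and> length ts \<le> R}" .
qed

lemma card_Ball_upper:
  assumes "n \<ge> 1" shows "card (Bl n R \<sigma>) \<le> (R+1) * n^(2*R)"
proof -
  have "card (Bl n R \<sigma>) \<le> card ((\<lambda>ts. tr (rev ts) \<sigma>) ` {ts. set ts \<subseteq> {0..<n} \<times> {0..<n} \<and> length ts \<le> R})"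
    by (intro card_mono finite_imageI Ball_sub finite_lists_length_le) simp
  also have "\<dots> \<le> card {ts. set ts \<subseteq> {0..<n} \<times> {0..<n} \<and> length ts \<le> R}"
    by (rule card_image_le) (intro finite_lists_length_le, simp)
  also have "\<dots> = (\<Sum>i\<le>R. card ({0..<n} \<times> {0..<n})^i)"
    by (rule card_lists_length_le) simp
  also have "\<dots> = (\<Sum>i\<le>R. (n*n)^i)" by (simp add: card_cartesian_product)
  also have "\<dots> \<le> (\<Sum>i\<le>R. (n*n)^R)"
    by (intro sum_mono power_increasing) (use assms in auto)
  also have "\<dots> = (R+1) * n^(2*R)" by (simp add: power_mult power2_eq_square)
  finally show ?thesis .
qed


locale lowb =
  fixes n R :: nat
  assumes R1: "R \<ge> 1"
begin

definition d where "d = 2 * R"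
definition c0 where "c0 = n div d"
definition I where "I c = (\<lambda>a. d * a + c) ` {..<c0}"
definition Phi where "Phi = PiE {..<d} I"
definition tsf where "tsf f = map (\<lambda>i. (f (2*i), f (2*i+1))) [0..<R]"
definition gi where "gi f i = tr (rev (take i (tsf f))) id"

lemma d_pos: "d > 0" using R1 by (simp add: d_def)

lemma f_props:
  assumes "f \<in> Phi" "c < d" shows "f c mod d = c" "f c < n"
proof -
  have "f c \<in> I c" using assms by (auto simp: Phi_def)
  then obtain a where a: "a < c0" "f c = d * a + c" by (auto simp: I_def)
  have "f c = c + d * a" using a by simp
  then have "f c mod d = c mod d" by (simp only: mod_mult_self2)
  then show "f c mod d = c" using assms(2) by (simp only: mod_less)
  have "d * a + c < d * (a + 1)" using assms(2) by simp
  also have "\<dots> \<le> d * c0" using a(1) by (intro mult_le_mono2) simp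
  also have "\<dots> \<le> n" unfolding c0_def by simp
  finally show "f c < n" using a by simp
qed

lemma f_inj:
  assumes "f \<in> Phi" "c < d" "c' < d" "f c = f c'" shows "c = c'"
proof -
  have "c = f c mod d" using f_props(1)[OF assms(1,2)] by simp
  also have "\<dots> = f c' mod d" using assms(4) by (rule arg_cong)
  also have "\<dots> = c'" using f_props(1)[OF assms(1,3)] .
  finally show ?thesis .
qed

lemma gi_step:
  assumes "i < R" shows "gi f (Suc i) = Transposition.transpose (f (2*i)) (f (2*i+1)) \<circ> gi f i"
proof -
  have l: "length (tsf f) = R" by (simp add: tsf_def)
  have "take (Suc i) (tsf f) = take i (tsf f) @ [tsf f ! i]"
    using assms l by (simp add: take_Suc_conv_app_nth)
  moreover have "tsf f ! i = (f (2*i), f (2*i+1))" using assms by (simp add: tsf_def)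
  ultimately show ?thesis by (simp add: gi_def tr_append)
qed

lemma gi_inv:
  assumes "f \<in> Phi" "i \<le> R"
  shows "(\<forall>x. (\<forall>c<2*i. x \<noteq> f c) \<longrightarrow> gi f i x = x) \<and> (\<forall>c<i. gi f i (f (2*c)) = f (2*c+1))"
  using assms(2)
proof (induction i)
  case 0
  then show ?case by (simp add: gi_def)
next
  case (Suc i)
  then have i: "i < R" by simp
  have IH: "\<And>x. (\<forall>c<2*i. x \<noteq> f c) \<Longrightarrow> gi f i x = x" "\<And>c. c < i \<Longrightarrow> gi f i (f (2*c)) = f (2*c+1)"
    using Suc by auto
  have dd: "2*i+1 < d" using i by (simp add: d_def)
  have A: "gi f (Suc i) x = x" if x: "\<forall>c<2*Suc i. x \<noteq> f c" for x
  proof -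
    have "gi f i x = x" using x by (intro IH(1)) auto
    moreover have "x \<noteq> f (2*i)" "x \<noteq> f (2*i+1)" using x by auto
    ultimately show ?thesis using gi_step[OF i] by simp
  qed
  have B: "gi f (Suc i) (f (2*c)) = f (2*c+1)" if c: "c < Suc i" for c
  proof (cases "c < i")
    case True
    have "f (2*c+1) \<noteq> f (2*i)" "f (2*c+1) \<noteq> f (2*i+1)"
      using f_inj[OF assms(1), of "2*c+1" "2*i"] f_inj[OF assms(1), of "2*c+1" "2*i+1"] True dd
      by auto
    then show ?thesis using gi_step[OF i] IH(2)[OF True] by simp
  next
    case False
    then have ci: "c = i" using c by simp
    have "\<forall>c'<2*i. f (2*i) \<noteq> f c'"
    proof (intro allI impI)
      fix c' assume c': "c' < 2*i"
      then have "c' < d" "2*i < d" using dd by auto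
      then show "f (2*i) \<noteq> f c'" using f_inj[OF assms(1), of "2*i" c'] c' by auto
    qed
    then have "gi f i (f (2*i)) = f (2*i)" by (rule IH(1))
    then show ?thesis using gi_step[OF i] ci by simp
  qed
  show ?case using A B by blast
qed

definition G where "G f = tr (rev (tsf f)) id"

lemma G_gi: "G f = gi f R" by (simp add: G_def gi_def tsf_def)

lemma G_props:
  assumes "f \<in> Phi"
  shows "\<And>x. (\<forall>c<d. x \<noteq> f c) \<Longrightarrow> G f x = x" "\<And>c. c < R \<Longrightarrow> G f (f (2*c)) = f (2*c+1)"
  using gi_inv[OF assms, of R] by (auto simp: G_gi d_def)

lemma G_inj:
  assumes "f \<in> Phi" "f' \<in> Phi" "G f = G f'" shows "f = f'"
proof -
  have ev: "f (2*k) = f' (2*k)" if k: "k < R" for k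
  proof (rule ccontr)
    assume ne: "f (2*k) \<noteq> f' (2*k)"
    have kd: "2*k < d" "2*k+1 < d" using k by (auto simp: d_def)
    have "\<forall>c<d. f (2*k) \<noteq> f' c"
    proof (intro allI impI)
      fix c assume c: "c < d"
      show "f (2*k) \<noteq> f' c"
      proof (cases "c = 2*k")
        case True then show ?thesis using ne by simp
      next
        case False
        then show ?thesis using f_props(1)[OF assms(1) kd(1)] f_props(1)[OF assms(2) c] by metis
      qed
    qed
    then have "G f' (f (2*k)) = f (2*k)" using G_props(1)[OF assms(2)] by blast
    moreover have "G f (f (2*k)) = f (2*k+1)" using G_props(2)[OF assms(1) k] .
    moreover have "f (2*k+1) \<noteq> f (2*k)" using f_inj[OF assms(1) kd(2) kd(1)] by auto
    ultimately show False using assms(3) by simp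
  qed
  have od: "f (2*k+1) = f' (2*k+1)" if k: "k < R" for k
    using G_props(2)[OF assms(1) k] G_props(2)[OF assms(2) k] ev[OF k] assms(3) by simp
  show ?thesis
  proof (rule PiE_ext)
    show "f \<in> PiE {..<d} I" "f' \<in> PiE {..<d} I" using assms by (auto simp: Phi_def)
    fix c assume "c \<in> {..<d}"
    then have c: "c < d" by simp
    show "f c = f' c"
    proof (cases "even c")
      case True
      then obtain k where "c = 2*k" by auto
      then show ?thesis using ev[of k] c by (simp add: d_def)
    next
      case False
      then obtain k where "c = 2*k+1" using oddE by blast
      then show ?thesis using od[of k] c by (simp add: d_def)
    qed
  qed
qed

lemma card_Phi: "card Phi = c0 ^ d"
proof -
  have "card (I c) = c0" for c
    unfolding I_def using d_pos by (subst card_image) (auto simp: inj_on_def)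
  then show ?thesis unfolding Phi_def by (simp add: card_PiE)
qed

lemma valid_tsf: assumes "f \<in> Phi" shows "valid n (tsf f)"
proof -
  have "f (2*i) < n \<and> f (2*i+1) < n \<and> f (2*i) \<noteq> f (2*i+1)" if "i < R" for i
  proof -
    have kd: "2*i < d" "2*i+1 < d" using that by (auto simp: d_def)
    show ?thesis using f_props(2)[OF assms kd(1)] f_props(2)[OF assms kd(2)]
      f_inj[OF assms kd(1) kd(2)] by auto
  qed
  then show ?thesis by (auto simp: valid_def tsf_def)
qed

lemma lower:
  assumes "\<sigma> \<in> Pat n" shows "c0 ^ d \<le> card (Bl n R \<sigma> \<inter> Pat n)"
proof -
  let ?e = "\<lambda>f. tr (rev (tsf f)) \<sigma>"
  have e: "?e f = G f \<circ> \<sigma>" for f by (simp add: G_def tr_comp[of _ \<sigma>])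
  have surj: "surj \<sigma>" using assms by (simp add: Pat_def permutes_surj)
  have inj: "inj_on ?e Phi"
  proof (rule inj_onI)
    fix f f' assume f: "f \<in> Phi" "f' \<in> Phi" "?e f = ?e f'"
    have "G f x = G f' x" for x
    proof -
      obtain y where "x = \<sigma> y" using surj by (metis surjD)
      then show ?thesis using f(3) e[of f] e[of f'] by (metis comp_apply)
    qed
    then show "f = f'" using G_inj[OF f(1,2)] by blast
  qed
  have sub: "?e ` Phi \<subseteq> Bl n R \<sigma> \<inter> Pat n"
  proof
    fix t assume "t \<in> ?e ` Phi"
    then obtain f where f: "f \<in> Phi" "t = ?e f" by auto
    have v: "valid n (tsf f)" by (rule valid_tsf[OF f(1)])
    have "length (tsf f) \<le> R" by (simp add: tsf_def)
    moreover have "\<sigma> = tr (tsf f) t" using f(2) tr_rev by simp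
    ultimately have "t \<in> Bl n R \<sigma>" using v by (auto simp: Bl_def)
    moreover have "t \<in> Pat n" using f(2) tr_Pat[OF assms] v valid_rev by simp
    ultimately show "t \<in> Bl n R \<sigma> \<inter> Pat n" by simp
  qed
  have "c0 ^ d = card (?e ` Phi)" using card_Phi card_image[OF inj] by simp
  also have "\<dots> \<le> card (Bl n R \<sigma> \<inter> Pat n)"
    by (rule card_mono[OF _ sub]) (simp add: finite_Ball)
  finally show ?thesis .
qed

end

lemma card_Ball_lower:
  assumes "R \<ge> 1" "\<sigma> \<in> Pat n"
  shows "(n div (2*R)) ^ (2*R) \<le> card (Bl n R \<sigma> \<inter> Pat n)"
proof -
  interpret lowb n R using assms(1) by unfold_locales
  show ?thesis using lower[OF assms(2)] by (simp add: c0_def d_def)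
qed


definition fv :: "nat \<Rightarrow> nat \<Rightarrow> nat" where "fv v x = (if v \<le> x then x + 1 else x)"
definition ins :: "nat \<Rightarrow> nat list \<Rightarrow> nat list" where "ins v ys = map (fv v) ys @ [v]"

lemma fv_less_iff: "fv v x < fv v y \<longleftrightarrow> x < y" by (auto simp: fv_def)
lemma fv_ne: "fv v x \<noteq> v" by (auto simp: fv_def)
lemma fv_lt_v: "fv v x < v \<longleftrightarrow> x < v" by (auto simp: fv_def)
lemma v_lt_fv: "v < fv v x \<longleftrightarrow> v \<le> x" by (auto simp: fv_def)
lemma inj_fv: "inj (fv v)" by (auto simp: inj_on_def fv_def split: if_splits)

lemma ins_Pl:
  assumes "ys \<in> Pl M" "v \<le> M" shows "ins v ys \<in> Pl (Suc M)"
proof -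
  have d: "distinct ys" and s: "set ys = {0..<M}" using assms by (auto simp: Pl_iff)
  have "distinct (map (fv v) ys)" using d inj_fv by (simp add: distinct_map inj_on_def)
  moreover have "v \<notin> set (map (fv v) ys)" by (auto simp: fv_def)
  ultimately have "distinct (ins v ys)" by (simp add: ins_def)
  moreover have "set (ins v ys) = {0..<Suc M}"
  proof
    show "set (ins v ys) \<subseteq> {0..<Suc M}" using s assms(2) by (auto simp: ins_def fv_def)
    show "{0..<Suc M} \<subseteq> set (ins v ys)"
    proof
      fix x assume x: "x \<in> {0..<Suc M}"
      show "x \<in> set (ins v ys)"
      proof (cases "x < v")
        case True
        then have "x \<in> set ys" "fv v x = x" using s x assms(2) by (auto simp: fv_def)
        then show ?thesis by (force simp: ins_def)
      next
        case False
        show ?thesis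
        proof (cases "x = v")
          case True then show ?thesis by (simp add: ins_def)
        next
          case False
          then have "x - 1 \<in> set ys" "fv v (x - 1) = x" using s x \<open>\<not> x < v\<close> by (auto simp: fv_def)
          then show ?thesis by (force simp: ins_def)
        qed
      qed
    qed
  qed
  ultimately show ?thesis by (simp add: Pl_iff)
qed

lemma ins_surj:
  assumes "zs \<in> Pl (Suc M)" shows "\<exists>ys v. ys \<in> Pl M \<and> v \<le> M \<and> zs = ins v ys"
proof -
  have d: "distinct zs" and s: "set zs = {0..<Suc M}" using assms by (auto simp: Pl_iff)
  have l: "length zs = Suc M" using assms Pl_length by auto
  define v where "v = last zs"
  define g where "g x = (if v < x then x - 1 else x)" for x
  define ys where "ys = map g (butlast zs)"
  have zsv: "zs = butlast zs @ [v]" using l v_def by (metis append_butlast_last_id list.size(3) nat.distinct(1))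
  have vin: "v \<in> set zs" using l v_def by (metis last_in_set list.size(3) nat.distinct(1))
  have vM: "v \<le> M" using vin s by auto
  have dbl: "distinct (butlast zs @ [v])" using d zsv by metis
  then have vnot: "v \<notin> set (butlast zs)" and db: "distinct (butlast zs)" by auto
  have e: "set zs = set (butlast zs) \<union> {v}" using arg_cong[OF zsv, of set] by simp
  have sb: "set (butlast zs) = {0..<Suc M} - {v}" using e vnot s by auto
  have ginj: "inj_on g (set (butlast zs))"
  proof (rule inj_onI)
    fix x y assume xy: "x \<in> set (butlast zs)" "y \<in> set (butlast zs)" "g x = g y"
    have "x \<noteq> v" "y \<noteq> v" using xy vnot by auto
    then show "x = y" using xy(3) unfolding g_def by (auto split: if_splits)
  qed
  have dy: "distinct ys" unfolding ys_def using db ginj by (simp add: distinct_map)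
  have sy: "set ys = {0..<M}"
  proof
    show "set ys \<subseteq> {0..<M}"
    proof
      fix y assume "y \<in> set ys"
      then obtain x where x: "x \<in> set (butlast zs)" "y = g x" unfolding ys_def by auto
      then have x2: "x < Suc M" "x \<noteq> v" using sb by auto
      show "y \<in> {0..<M}"
      proof (cases "v < x")
        case True then have "y = x - 1" using x by (simp add: g_def)
        then show ?thesis using x2 True by simp
      next
        case False then have "y = x" using x by (simp add: g_def)
        then show ?thesis using x2 False vM by simp
      qed
    qed
    show "{0..<M} \<subseteq> set ys"
    proof
      fix x assume x: "x \<in> {0..<M}"
      show "x \<in> set ys"
      proof (cases "x < v")
        case True then have "x \<in> set (butlast zs)" "g x = x" using sb x by (auto simp: g_def)
        then show ?thesis unfolding ys_def by force
      next
        case False then have "Suc x \<in> set (butlast zs)" "g (Suc x) = x" using sb x by (auto simp: g_def)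
        then show ?thesis unfolding ys_def by force
      qed
    qed
  qed
  have "map (fv v) ys = butlast zs"
    unfolding ys_def using vnot by (auto simp: g_def fv_def intro!: map_idI)
  then have "zs = ins v ys" using zsv by (simp add: ins_def)
  then show ?thesis using dy sy vM by (auto simp: Pl_iff)
qed

lemma pat_take_ins:
  assumes "n \<le> length ys" shows "pat (take n (ins v ys)) = pat (take n ys)"
proof -
  have "take n (ins v ys) = map (fv v) (take n ys)" using assms by (simp add: ins_def take_map)
  then show ?thesis using fv_less_iff by (simp add: pat_map_mono)
qed

lemma drop_ins:
  assumes "k \<le> length ys" shows "drop k (ins v ys) = map (fv v) (drop k ys) @ [v]"
  using assms by (simp add: ins_def drop_map)


locale sk =
  fixes n k R :: nat and \<sigma> :: "nat \<Rightarrow> nat" and ys :: "nat list"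
  assumes n1: "n \<ge> 1" and k1: "k \<ge> 1" and R1: "R \<ge> 1" and ys: "ys \<in> Pl (n+k-1)"
begin

definition w where "w = drop k ys"
definition z where "z v = map (fv v) w @ [v]"
definition zeta where "zeta v = pat (z v)"
definition r where "r v = card {q. q < n - 1 \<and> w!q < v}"

lemma ly: "length ys = n + k - 1" using ys Pl_length by auto
lemma lw: "length w = n - 1" using ly by (simp add: w_def)
lemma dys: "distinct ys" using ys by (simp add: Pl_iff)
lemma dw: "distinct w" using dys by (simp add: w_def distinct_drop)
lemma sys: "set ys = {0..<n+k-1}" using ys by (simp add: Pl_iff)
lemma sys2: "set ys = set (take k ys) \<union> set w"
  unfolding w_def by (metis append_take_drop_id set_append)

lemma lz: "length (z v) = n" using lw n1 by (simp add: z_def)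
lemma dz: "distinct (z v)"
proof -
  have "distinct (map (fv v) w)" using dw inj_fv by (simp add: distinct_map inj_on_def)
  moreover have "v \<notin> set (map (fv v) w)" by (auto simp: fv_def)
  ultimately show ?thesis by (simp add: z_def)
qed

lemma zeta_perm: "zeta v permutes {0..<n}" using pat_permutes[OF dz] lz by (simp add: zeta_def)
lemma zeta_inj: "inj_on (zeta v) {0..<n}" using zeta_perm by (rule permutes_inj_on)

lemma z_nth: "p < n - 1 \<Longrightarrow> z v ! p = fv v (w!p)" "z v ! (n-1) = v"
  using lw by (auto simp: z_def nth_append)

lemma le_iff_r: assumes "p < n - 1" shows "v \<le> w!p \<longleftrightarrow> r v \<le> pat w p"
proof
  assume "v \<le> w!p"
  then have "{q. q < n - 1 \<and> w!q < v} \<subseteq> {q. q < n - 1 \<and> w!q < w!p}" by auto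
  then show "r v \<le> pat w p" using assms lw by (simp add: r_def pat_def card_mono)
next
  assume h: "r v \<le> pat w p"
  show "v \<le> w!p"
  proof (rule ccontr)
    assume "\<not> v \<le> w!p"
    then have lt: "w!p < v" by simp
    have "{q. q < n - 1 \<and> w!q < w!p} \<subset> {q. q < n - 1 \<and> w!q < v}"
    proof (rule psubsetI)
      show "{q. q < n - 1 \<and> w!q < w!p} \<subseteq> {q. q < n - 1 \<and> w!q < v}" using lt by auto
      have "p \<in> {q. q < n - 1 \<and> w!q < v}" using assms lt by simp
      moreover have "p \<notin> {q. q < n - 1 \<and> w!q < w!p}" by simp
      ultimately show "{q. q < n - 1 \<and> w!q < w!p} \<noteq> {q. q < n - 1 \<and> w!q < v}" by metis
    qed
    then have "pat w p < r v" using assms lw by (simp add: r_def pat_def psubset_card_mono)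
    then show False using h by simp
  qed
qed

lemma zeta_lo: assumes p: "p < n - 1" shows "zeta v p = pat w p + (if r v \<le> pat w p then 1 else 0)"
proof -
  have A: "{q. q < n \<and> z v!q < z v!p} = {q. q < n - 1 \<and> w!q < w!p} \<union> (if v \<le> w!p then {n-1} else {})"
  proof (rule set_eqI)
    fix q
    show "q \<in> {q. q < n \<and> z v!q < z v!p} \<longleftrightarrow> q \<in> {q. q < n - 1 \<and> w!q < w!p} \<union> (if v \<le> w!p then {n-1} else {})"
    proof (cases "q < n - 1")
      case True then have "q < n" by simp
      then show ?thesis using True p z_nth(1)[of q v] z_nth(1)[of p v] by (simp add: fv_less_iff)
    next
      case False
      then show ?thesis
      proof (cases "q = n - 1")
        case True then show ?thesis using p z_nth(1)[of p v] z_nth(2)[of v] n1 by (simp add: v_lt_fv)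
      next
        case False then show ?thesis using \<open>\<not> q < n - 1\<close> by auto
      qed
    qed
  qed
  have "zeta v p = card {q. q < n \<and> z v!q < z v!p}" using p lz by (simp add: zeta_def pat_def)
  also have "\<dots> = card {q. q < n - 1 \<and> w!q < w!p} + (if v \<le> w!p then 1 else 0)"
    unfolding A by (simp add: card_Un_disjoint)
  also have "card {q. q < n - 1 \<and> w!q < w!p} = pat w p" using p lw by (simp add: pat_def)
  finally show ?thesis using le_iff_r[OF p] by simp
qed

lemma zeta_top: "zeta v (n - 1) = r v"
proof -
  have "{q. q < n \<and> z v!q < z v!(n-1)} = {q. q < n - 1 \<and> w!q < v}"
  proof (rule set_eqI)
    fix q
    show "q \<in> {q. q < n \<and> z v!q < z v!(n-1)} \<longleftrightarrow> q \<in> {q. q < n - 1 \<and> w!q < v}"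
    proof (cases "q < n - 1")
      case True then have "q < n" by simp
      then show ?thesis using True z_nth(1)[of q v] z_nth(2)[of v] by (simp add: fv_lt_v)
    next
      case False then show ?thesis using z_nth(2)[of v] n1 by (cases "q = n - 1") auto
    qed
  qed
  then show ?thesis using lz n1 by (simp add: zeta_def pat_def r_def)
qed

lemma r_le: "r v \<le> n - 1"
proof -
  have "r v \<le> card {0..<n-1}" unfolding r_def by (intro card_mono) auto
  then show ?thesis by simp
qed

lemma patw_perm: "pat w permutes {0..<n-1}" using pat_permutes[OF dw] lw by simp

lemma r_close:
  assumes "zeta v1 \<in> Bl n R \<sigma>" "zeta v2 \<in> Bl n R \<sigma>" "r v1 < r v2"
  shows "r v2 - r v1 < 4 * R"
proof -
  let ?P = "{p. p < n - 1 \<and> r v1 \<le> pat w p \<and> pat w p < r v2}"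
  have sub: "insert (n-1) ?P \<subseteq> {p \<in> {0..<n}. zeta v1 p \<noteq> zeta v2 p}"
  proof
    fix p assume "p \<in> insert (n-1) ?P"
    then show "p \<in> {p \<in> {0..<n}. zeta v1 p \<noteq> zeta v2 p}"
    proof
      assume "p = n - 1" then show ?thesis using zeta_top assms(3) n1 by auto
    next
      assume p: "p \<in> ?P"
      then show ?thesis using zeta_lo[of p v1] zeta_lo[of p v2] by auto
    qed
  qed
  have img: "pat w ` ?P = {r v1..<r v2}"
  proof
    show "pat w ` ?P \<subseteq> {r v1..<r v2}" by auto
    show "{r v1..<r v2} \<subseteq> pat w ` ?P"
    proof
      fix t assume t: "t \<in> {r v1..<r v2}"
      then have "t < n - 1" using r_le[of v2] by simp
      then obtain p where "p \<in> {0..<n-1}" "pat w p = t"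
        using permutes_image[OF patw_perm] by (metis atLeastLessThan_iff imageE le0)
      then show "t \<in> pat w ` ?P" using t by force
    qed
  qed
  have "card ?P = r v2 - r v1"
  proof -
    have "inj_on (pat w) ?P" using permutes_inj_on[OF patw_perm] by (rule inj_on_subset) auto
    then show ?thesis using card_image img by fastforce
  qed
  moreover have "n - 1 \<notin> ?P" by simp
  ultimately have "card (insert (n-1) ?P) = r v2 - r v1 + 1" by simp
  moreover have "card (insert (n-1) ?P) \<le> card {p \<in> {0..<n}. zeta v1 p \<noteq> zeta v2 p}"
    by (rule card_mono[OF _ sub]) simp
  moreover have "card {p \<in> {0..<n}. zeta v1 p \<noteq> zeta v2 p} \<le> 4 * R"
    by (rule Ball_diff2[OF assms(1) zeta_inj assms(2) zeta_inj])
  ultimately show ?thesis by simp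
qed

lemma r_mono: "v1 \<le> v2 \<Longrightarrow> {q. q < n - 1 \<and> w!q < v1} \<subseteq> {q. q < n - 1 \<and> w!q < v2}"
  by auto

lemma r_flat:
  assumes "v1 \<le> v2" "v2 < n + k" "r v1 = r v2"
  shows "v2 - v1 \<le> k"
proof -
  have eq: "{q. q < n - 1 \<and> w!q < v1} = {q. q < n - 1 \<and> w!q < v2}"
    using card_subset_eq[OF _ r_mono[OF assms(1)]] assms(3) by (simp add: r_def)
  have none: "\<not> (v1 \<le> w!q \<and> w!q < v2)" if q: "q < n - 1" for q
  proof
    assume h: "v1 \<le> w!q \<and> w!q < v2"
    have "q \<in> {q. q < n - 1 \<and> w!q < v2}" using q h by simp
    then have "q \<in> {q. q < n - 1 \<and> w!q < v1}" using eq by simp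
    then show False using h by simp
  qed
  have "{v1..<v2} \<subseteq> set (take k ys)"
  proof
    fix x assume x: "x \<in> {v1..<v2}"
    then have "x \<in> set ys" using sys assms(2) by auto
    moreover have "x \<notin> set w"
    proof
      assume "x \<in> set w"
      then obtain q where "q < n - 1" "w!q = x" using lw by (metis in_set_conv_nth)
      then show False using none x by auto
    qed
    ultimately show "x \<in> set (take k ys)" using sys2 by auto
  qed
  then have "card {v1..<v2} \<le> card (set (take k ys))" by (intro card_mono) auto
  also have "\<dots> \<le> k" using card_length[of "take k ys"] by simp
  finally show ?thesis by simp
qed

lemma card_fiber_r: "card {v. v < n + k \<and> r v = t} \<le> k + 1"
proof (cases "{v. v < n + k \<and> r v = t} = {}")
  case True then show ?thesis by (simp only: True card.empty)
next
  case False
  let ?S = "{v. v < n + k \<and> r v = t}"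
  have fin: "finite ?S" by simp
  define m where "m = Min ?S"
  have m: "m \<in> ?S" using Min_in[OF fin False] by (simp add: m_def)
  have "?S \<subseteq> {m..m+k}"
  proof
    fix v assume v: "v \<in> ?S"
    then have "m \<le> v" using Min_le[OF fin] by (simp add: m_def)
    moreover have "v - m \<le> k" using r_flat[OF \<open>m \<le> v\<close>] v m by simp
    ultimately show "v \<in> {m..m+k}" by simp
  qed
  then have "card ?S \<le> card {m..m+k}" by (intro card_mono) auto
  then show ?thesis by simp
qed

lemma card_V: "card {v. v < n + k \<and> zeta v \<in> Bl n R \<sigma>} \<le> 4 * R * (k + 1)"
proof (cases "{v. v < n + k \<and> zeta v \<in> Bl n R \<sigma>} = {}")
  case True then show ?thesis by (simp only: True card.empty)
next
  case False
  let ?V = "{v. v < n + k \<and> zeta v \<in> Bl n R \<sigma>}"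
  have finV: "finite ?V" by simp
  have finR: "finite (r ` ?V)" by simp
  have neR: "r ` ?V \<noteq> {}" using False by simp
  define m where "m = Min (r ` ?V)"
  have "r ` ?V \<subseteq> {m..<m + 4 * R}"
  proof
    fix t assume t: "t \<in> r ` ?V"
    then have mt: "m \<le> t" using Min_le[OF finR] by (simp add: m_def)
    obtain v where v: "v \<in> ?V" "t = r v" using t by auto
    obtain v0 where v0: "v0 \<in> ?V" "m = r v0" using Min_in[OF finR neR] by (auto simp: m_def)
    have "t - m < 4 * R"
    proof (cases "m < t")
      case True then show ?thesis using r_close[of v0 v] v v0 by simp
    next
      case False then show ?thesis using R1 by simp
    qed
    then show "t \<in> {m..<m + 4 * R}" using mt by simp
  qed
  then have cR: "card (r ` ?V) \<le> 4 * R" by (metis card_atLeastLessThan card_mono diff_add_inverse finite_atLeastLessThan)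
  have "?V \<subseteq> (\<Union>t\<in>r ` ?V. {v. v < n + k \<and> r v = t})" by auto
  then have "card ?V \<le> card (\<Union>t\<in>r ` ?V. {v. v < n + k \<and> r v = t})" by (intro card_mono) auto
  also have "\<dots> \<le> (\<Sum>t\<in>r ` ?V. card {v. v < n + k \<and> r v = t})" by (rule card_UN_le[OF finR])
  also have "\<dots> \<le> (\<Sum>t\<in>r ` ?V. k + 1)" by (intro sum_mono card_fiber_r)
  also have "\<dots> = card (r ` ?V) * (k + 1)" by simp
  also have "\<dots> \<le> 4 * R * (k + 1)" using cR by (intro mult_le_mono1)
  finally show ?thesis .
qed

lemma card_V_ins: "card {v. v < n + k \<and> pat (drop k (ins v ys)) \<in> Bl n R \<sigma>} \<le> 4 * R * (k + 1)"
proof -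
  have "pat (drop k (ins v ys)) = zeta v" for v
    using drop_ins[of k ys v] ly n1 by (simp add: zeta_def z_def w_def)
  then show ?thesis using card_V by simp
qed

end

lemma smallk:
  assumes "n \<ge> 1" "k \<ge> 1" "R \<ge> 1"
  shows "card {zs \<in> Pl (n+k). pat (take n zs) = \<tau> \<and> pat (drop k zs) \<in> Bl n R \<sigma>}
     \<le> 4 * R * (k + 1) * card {ys \<in> Pl (n+k-1). pat (take n ys) = \<tau>}"
proof -
  let ?Y = "{ys \<in> Pl (n+k-1). pat (take n ys) = \<tau>}"
  let ?V = "\<lambda>ys. {v. v < n + k \<and> pat (drop k (ins v ys)) \<in> Bl n R \<sigma>}"
  have M: "Suc (n + k - 1) = n + k" using assms by simp
  have sub: "{zs \<in> Pl (n+k). pat (take n zs) = \<tau> \<and> pat (drop k zs) \<in> Bl n R \<sigma>}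
      \<subseteq> (\<lambda>(ys,v). ins v ys) ` (SIGMA ys:?Y. ?V ys)"
  proof
    fix zs assume zs: "zs \<in> {zs \<in> Pl (n+k). pat (take n zs) = \<tau> \<and> pat (drop k zs) \<in> Bl n R \<sigma>}"
    then have "zs \<in> Pl (Suc (n+k-1))" using M by simp
    then obtain ys v where yv: "ys \<in> Pl (n+k-1)" "v \<le> n+k-1" "zs = ins v ys"
      using ins_surj by blast
    have "length ys = n + k - 1" using yv Pl_length by auto
    then have "pat (take n ys) = \<tau>" using zs yv pat_take_ins[of n ys v] assms by simp
    moreover have "v < n + k" using yv assms by simp
    ultimately show "zs \<in> (\<lambda>(ys,v). ins v ys) ` (SIGMA ys:?Y. ?V ys)"
      using zs yv by force
  qed
  have fin: "finite (SIGMA ys:?Y. ?V ys)" by (intro finite_SigmaI) (auto simp: finite_Pl)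
  have "card {zs \<in> Pl (n+k). pat (take n zs) = \<tau> \<and> pat (drop k zs) \<in> Bl n R \<sigma>}
      \<le> card ((\<lambda>(ys,v). ins v ys) ` (SIGMA ys:?Y. ?V ys))"
    by (rule card_mono[OF finite_imageI[OF fin] sub])
  also have "\<dots> \<le> card (SIGMA ys:?Y. ?V ys)" by (rule card_image_le[OF fin])
  also have "\<dots> = (\<Sum>ys\<in>?Y. card (?V ys))" by (rule card_SigmaI) (auto simp: finite_Pl)
  also have "\<dots> \<le> (\<Sum>ys\<in>?Y. 4 * R * (k + 1))"
  proof (rule sum_mono)
    fix ys assume "ys \<in> ?Y"
    then interpret sk n k R \<sigma> ys using assms by unfold_locales auto
    show "card (?V ys) \<le> 4 * R * (k + 1)" by (rule card_V_ins)
  qed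
  also have "\<dots> = 4 * R * (k + 1) * card ?Y" by simp
  finally show ?thesis .
qed


lemma pat_take_det:
  fixes xs :: "'a::linorder list"
  assumes "distinct xs" "k \<le> length xs"
  shows "pat (take k xs) = (\<lambda>p. if p < k then card {q. q < k \<and> pat xs q < pat xs p} else p)"
proof
  fix p
  show "pat (take k xs) p = (if p < k then card {q. q < k \<and> pat xs q < pat xs p} else p)"
  proof (cases "p < k")
    case True
    have "{q. q < k \<and> take k xs ! q < take k xs ! p} = {q. q < k \<and> pat xs q < pat xs p}"
      using True assms pat_lt_iff[OF assms(1)] by auto
    then show ?thesis using True assms by (simp add: pat_def)
  qed (use assms in \<open>simp add: pat_def\<close>)
qed

lemma pat_drop_det:
  fixes xs :: "'a::linorder list"
  assumes "distinct xs"
  shows "pat (drop d xs) = (\<lambda>p. if p < length xs - d then card {q. q < length xs - d \<and> pat xs (d+q) < pat xs (d+p)} else p)"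
proof
  fix p
  show "pat (drop d xs) p = (if p < length xs - d then card {q. q < length xs - d \<and> pat xs (d+q) < pat xs (d+p)} else p)"
  proof (cases "p < length xs - d")
    case True
    have "{q. q < length xs - d \<and> drop d xs ! q < drop d xs ! p} = {q. q < length xs - d \<and> pat xs (d+q) < pat xs (d+p)}"
      using True assms pat_lt_iff[OF assms(1), of "d+_" "d+p"] by auto
    then show ?thesis using True assms by (simp add: pat_def)
  qed (use assms in \<open>simp add: pat_def\<close>)
qed

locale crude =
  fixes n k :: nat and \<tau> \<tau>' :: "nat \<Rightarrow> nat"
  assumes k1: "1 \<le> k" and kn: "k \<le> n"
begin

definition Z where "Z = {zs \<in> Pl (n+k). pat (take n zs) = \<tau> \<and> pat (drop k zs) = \<tau>'}"

lemma Z_basic: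
  assumes "zs \<in> Z"
  shows "distinct zs" "length zs = n + k" "set zs = {0..<n+k}"
    "pat (take n zs) = \<tau>" "pat (drop k zs) = \<tau>'"
  using assms Pl_length by (auto simp: Z_def Pl_iff)

lemma mid_set:
  assumes "zs \<in> Z" "k \<le> q" "q < n"
  shows "{q'. q' < n + k \<and> zs!q' < zs!q} =
    {q'. q' < n \<and> \<tau> q' < \<tau> q} \<union> {q'. k \<le> q' \<and> q' < n + k \<and> \<tau>' (q' - k) < \<tau>' (q - k)}"
proof -
  note B = Z_basic[OF assms(1)]
  have d1: "distinct (take n zs)" and d2: "distinct (drop k zs)" using B(1) by auto
  have A1: "zs!q' < zs!q \<longleftrightarrow> \<tau> q' < \<tau> q" if "q' < n" for q'
    using pat_lt_iff[OF d1, of q' q] that assms B by simp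
  have A2: "zs!q' < zs!q \<longleftrightarrow> \<tau>' (q' - k) < \<tau>' (q - k)" if "k \<le> q'" "q' < n + k" for q'
    using pat_lt_iff[OF d2, of "q' - k" "q - k"] that assms B by simp
  show ?thesis
  proof (rule set_eqI)
    fix q'
    show "q' \<in> {q'. q' < n + k \<and> zs!q' < zs!q} \<longleftrightarrow>
      q' \<in> {q'. q' < n \<and> \<tau> q' < \<tau> q} \<union> {q'. k \<le> q' \<and> q' < n + k \<and> \<tau>' (q' - k) < \<tau>' (q - k)}"
    proof (cases "q' < n")
      case True
      then show ?thesis using A1[OF True] A2[of q'] by auto
    next
      case False
      then show ?thesis using A2[of q'] kn by auto
    qed
  qed
qed

lemma mid_val:
  assumes "zs \<in> Z" "zs' \<in> Z" "k \<le> q" "q < n"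
  shows "zs!q = zs'!q"
proof -
  have "zs!q = card {q'. q' < n + k \<and> zs!q' < zs!q}"
    using card_less_val[of zs q] Z_basic[OF assms(1)] assms(4) by simp
  also have "\<dots> = card {q'. q' < n + k \<and> zs'!q' < zs'!q}" using mid_set[OF assms(1,3,4)] mid_set[OF assms(2,3,4)] by simp
  also have "\<dots> = zs'!q" using card_less_val[of zs' q] Z_basic[OF assms(2)] assms(4) by simp
  finally show ?thesis .
qed

lemma inj_A: "inj_on (\<lambda>zs. set (take k zs)) Z"
proof (rule inj_onI)
  fix zs zs' assume z: "zs \<in> Z" "zs' \<in> Z" and eqs: "set (take k zs) = set (take k zs')"
  note B = Z_basic[OF z(1)] and B' = Z_basic[OF z(2)]
  have ptk: "pat (take k zs) = pat (take k zs')"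
  proof -
    have e: "take k zs = take k (take n zs)" "take k zs' = take k (take n zs')" using kn by auto
    have dd: "distinct (take n zs)" "distinct (take n zs')" using B(1) B'(1) by auto
    have ll: "k \<le> length (take n zs)" "k \<le> length (take n zs')" using B(2) B'(2) kn by auto
    have "pat (take k zs) = (\<lambda>p. if p < k then card {q. q < k \<and> \<tau> q < \<tau> p} else p)"
      unfolding e(1) pat_take_det[OF dd(1) ll(1)] B(4) ..
    moreover have "pat (take k zs') = (\<lambda>p. if p < k then card {q. q < k \<and> \<tau> q < \<tau> p} else p)"
      unfolding e(2) pat_take_det[OF dd(2) ll(2)] B'(4) ..
    ultimately show ?thesis by simp
  qed
  have tk: "take k zs = take k zs'"
    by (rule pat_unique) (use B(1) B'(1) eqs ptk in auto)
  have tn: "take n zs = take n zs'"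
  proof (rule nth_equalityI)
    show "length (take n zs) = length (take n zs')" using B(2) B'(2) by simp
    fix q assume q: "q < length (take n zs)"
    then have qn: "q < n" using B(2) by simp
    show "take n zs ! q = take n zs' ! q"
    proof (cases "q < k")
      case True
      then have "take k zs ! q = take k zs' ! q" using tk by simp
      then show ?thesis using True qn by simp
    next
      case False
      then show ?thesis using mid_val[OF z, of q] qn by simp
    qed
  qed
  have pdn: "pat (drop n zs) = pat (drop n zs')"
  proof -
    have e: "drop n zs = drop (n-k) (drop k zs)" "drop n zs' = drop (n-k) (drop k zs')" using kn by auto
    have dd: "distinct (drop k zs)" "distinct (drop k zs')" using B(1) B'(1) by auto
    have ll: "length (drop k zs) = n" "length (drop k zs') = n" using B(2) B'(2) by auto
    have "pat (drop n zs) = (\<lambda>p. if p < n - (n-k) then card {q. q < n - (n-k) \<and> \<tau>' ((n-k)+q) < \<tau>' ((n-k)+p)} else p)"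
      unfolding e(1) pat_drop_det[OF dd(1)] B(5) ll(1) ..
    moreover have "pat (drop n zs') = (\<lambda>p. if p < n - (n-k) then card {q. q < n - (n-k) \<and> \<tau>' ((n-k)+q) < \<tau>' ((n-k)+p)} else p)"
      unfolding e(2) pat_drop_det[OF dd(2)] B'(5) ll(2) ..
    ultimately show ?thesis by simp
  qed
  have sdn: "set (drop n zs) = {0..<n+k} - set (take n zs)" if "zs \<in> Z" for zs
  proof -
    note C = Z_basic[OF that]
    have "set (take n zs) \<inter> set (drop n zs) = {}"
      using set_take_disj_set_drop_if_distinct[OF C(1)] by simp
    moreover have "set (take n zs) \<union> set (drop n zs) = {0..<n+k}"
      using C(3) by (metis append_take_drop_id set_append)
    ultimately show ?thesis by blast
  qed
  have dn: "drop n zs = drop n zs'"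
    by (rule pat_unique) (use B(1) B'(1) pdn sdn[OF z(1)] sdn[OF z(2)] tn in auto)
  show "zs = zs'" using tn dn by (metis append_take_drop_id)
qed

lemma card_Z: "card Z \<le> (2*k) choose k"
proof (cases "Z = {}")
  case True then show ?thesis by simp
next
  case False
  then obtain z0 where z0: "z0 \<in> Z" by auto
  note B0 = Z_basic[OF z0]
  define U where "U = {0..<n+k} - (\<lambda>q. z0!q) ` {k..<n}"
  have inj0: "inj_on (\<lambda>q. z0!q) {k..<n}" using B0 by (intro inj_on_nth) auto
  have sub0: "(\<lambda>q. z0!q) ` {k..<n} \<subseteq> {0..<n+k}"
  proof
    fix x assume "x \<in> (\<lambda>q. z0!q) ` {k..<n}"
    then obtain q where q: "q \<in> {k..<n}" "x = z0!q" by auto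
    then have "q < length z0" using B0(2) by simp
    then have "z0!q \<in> set z0" by (rule nth_mem)
    then show "x \<in> {0..<n+k}" using q B0(3) by simp
  qed
  have cU: "card U = 2 * k"
  proof -
    have "card U = card {0..<n+k} - card ((\<lambda>q. z0!q) ` {k..<n})"
      unfolding U_def by (rule card_Diff_subset) (use sub0 in auto)
    also have "\<dots> = (n + k) - (n - k)" using card_image[OF inj0] by simp
    finally show ?thesis using kn by simp
  qed
  have into: "(\<lambda>zs. set (take k zs)) ` Z \<subseteq> {S. S \<subseteq> U \<and> card S = k}"
  proof
    fix S assume "S \<in> (\<lambda>zs. set (take k zs)) ` Z"
    then obtain zs where zs: "zs \<in> Z" "S = set (take k zs)" by auto
    note B = Z_basic[OF zs(1)]
    have "card S = k" using zs B kn by (simp add: distinct_card)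
    moreover have "S \<subseteq> U"
    proof
      fix x assume "x \<in> S"
      then obtain q where q: "q < k" "x = zs!q" using zs B kn by (auto simp: in_set_conv_nth)
      have "x \<in> {0..<n+k}" using q B by (metis kn le_add2 nth_mem order.strict_trans2 le_trans)
      moreover have "x \<noteq> z0!q'" if q': "q' \<in> {k..<n}" for q'
      proof -
        have "z0!q' = zs!q'" using mid_val[OF z0 zs(1)] q' by simp
        moreover have "zs!q \<noteq> zs!q'" using B q q' kn by (simp add: nth_eq_iff_index_eq)
        ultimately show ?thesis using q by simp
      qed
      ultimately show "x \<in> U" unfolding U_def by blast
    qed
    ultimately show "S \<in> {S. S \<subseteq> U \<and> card S = k}" by simp
  qed
  have "card Z = card ((\<lambda>zs. set (take k zs)) ` Z)" using card_image[OF inj_A] by simp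
  also have "\<dots> \<le> card {S. S \<subseteq> U \<and> card S = k}"
    by (rule card_mono[OF _ into]) (simp add: U_def)
  also have "\<dots> = card U choose k" by (rule n_subsets) (simp add: U_def)
  finally show ?thesis using cU by simp
qed

end

lemma crude_bound:
  assumes "1 \<le> k" "k \<le> n"
  shows "card {zs \<in> Pl (n+k). pat (take n zs) = \<tau> \<and> pat (drop k zs) = \<tau>'} \<le> 4 ^ k"
proof -
  interpret crude n k \<tau> \<tau>' using assms by unfold_locales
  have "card {zs \<in> Pl (n+k). pat (take n zs) = \<tau> \<and> pat (drop k zs) = \<tau>'} \<le> (2*k) choose k"
    using card_Z by (simp add: Z_def)
  also have "\<dots> \<le> 2 ^ (2*k)" by (rule binomial_le_pow2)
  also have "\<dots> = 4 ^ k" by (simp add: power_mult)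
  finally show ?thesis .
qed


lemma bonf:
  fixes A :: "nat \<Rightarrow> 'a set" and m :: nat
  assumes "\<And>j. finite (A j)"
  shows "real (card (\<Union>j<m. A j)) \<ge> (\<Sum>j<m. real (card (A j))) - (\<Sum>j<m. \<Sum>i<j. real (card (A i \<inter> A j)))"
proof (induction m)
  case 0 then show ?case by simp
next
  case (Suc m)
  let ?X = "\<Union>j<m. A j"
  have finX: "finite ?X" using assms by auto
  have e: "(\<Union>j<Suc m. A j) = ?X \<union> A m" by (auto simp: lessThan_Suc)
  have ci: "card (?X \<union> A m) + card (?X \<inter> A m) = card ?X + card (A m)"
    using card_Un_Int[OF finX assms] by simp
  have "?X \<inter> A m = (\<Union>i<m. A i \<inter> A m)" by auto
  then have "card (?X \<inter> A m) \<le> (\<Sum>i<m. card (A i \<inter> A m))"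
    by (metis card_UN_le finite_lessThan)
  then have "real (card (?X \<inter> A m)) \<le> (\<Sum>i<m. real (card (A i \<inter> A m)))"
    by (metis of_nat_le_iff of_nat_sum)
  then show ?case using Suc.IH ci e by (simp add: lessThan_Suc)
qed

lemma fact_ge_pow: "fact n * n ^ k \<le> (fact (n + k) :: nat)"
proof (induction k)
  case 0 then show ?case by simp
next
  case (Suc k)
  have "fact n * n ^ Suc k = (fact n * n ^ k) * n" by simp
  also have "\<dots> \<le> fact (n + k) * (n + k + 1)" using Suc by (intro mult_le_mono) auto
  also have "\<dots> = fact (n + Suc k)" by (simp add: algebra_simps)
  finally show ?case .
qed

context
  fixes n R :: nat and \<sigma> :: "nat \<Rightarrow> nat"
  assumes n1: "n \<ge> 1" and R1: "R \<ge> 1"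
begin

definition LL where "LL = 2 * n - 1"
definition Aj where "Aj j = {xs \<in> Pl LL. pat (take n (drop j xs)) \<in> Bl n R \<sigma>}"
definition bb where "bb = card (Bl n R \<sigma> \<inter> Pat n)"

lemma finite_Aj: "finite (Aj j)" by (simp add: Aj_def finite_Pl)

lemma card_Aj:
  assumes "j + n \<le> LL" shows "fact n * card (Aj j) = bb * fact LL"
proof -
  have U: "Aj j = (\<Union>\<tau>\<in>Bl n R \<sigma> \<inter> Pat n. F LL j n \<tau>)"
    using pat_seg_Pat[OF assms] by (auto simp: Aj_def F_def)
  have "card (Aj j) = (\<Sum>\<tau>\<in>Bl n R \<sigma> \<inter> Pat n. card (F LL j n \<tau>))"
    unfolding U by (rule card_UN_disjoint) (auto simp: finite_Ball F_def finite_Pl)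
  then have "fact n * card (Aj j) = (\<Sum>\<tau>\<in>Bl n R \<sigma> \<inter> Pat n. fact n * card (F LL j n \<tau>))"
    by (simp add: sum_distrib_left)
  also have "\<dots> = (\<Sum>\<tau>\<in>Bl n R \<sigma> \<inter> Pat n. fact LL)"
    using fiber_card[OF assms] by (intro sum.cong) auto
  finally show ?thesis by (simp add: bb_def)
qed

definition Ck where "Ck k zs \<longleftrightarrow> pat (take n zs) \<in> Bl n R \<sigma> \<and> pat (take n (drop k zs)) \<in> Bl n R \<sigma>"

lemma mono_inv_Ck: "mono_inv (Ck k)"
  unfolding mono_inv_def
proof (intro allI impI)
  fix zs :: "nat list" and f :: "nat \<Rightarrow> nat"
  assume m: "\<forall>x\<in>set zs. \<forall>y\<in>set zs. f x < f y \<longleftrightarrow> x < y"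
  have s1: "set (take n zs) \<subseteq> set zs" by (rule set_take_subset)
  have s2: "set (take n (drop k zs)) \<subseteq> set zs" using set_take_subset set_drop_subset by fastforce
  have "pat (map f (take n zs)) = pat (take n zs)" by (rule pat_map_mono) (use m s1 in blast)
  moreover have "pat (map f (take n (drop k zs))) = pat (take n (drop k zs))"
    by (rule pat_map_mono) (use m s2 in blast)
  ultimately show "Ck k (map f zs) = Ck k zs" unfolding Ck_def by (simp add: take_map drop_map)
qed

lemma card_pair:
  assumes "j + n + k \<le> LL"
  shows "fact (n+k) * card (Aj j \<inter> Aj (j+k)) = fact LL * card {zs \<in> Pl (n+k). Ck k zs}"
proof -
  have "Aj j \<inter> Aj (j+k) = {xs \<in> Pl LL. Ck k (take (n+k) (drop j xs))}"
    by (auto simp: Aj_def Ck_def drop_take add.commute)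
  then show ?thesis using seg_card[of j "n+k" LL "Ck k", OF _ mono_inv_Ck] assms by simp
qed

definition Tk where "Tk k \<tau> = card {zs \<in> Pl (n+k). pat (take n zs) = \<tau> \<and> pat (take n (drop k zs)) \<in> Bl n R \<sigma>}"

lemma T_split:
  "card {zs \<in> Pl (n+k). Ck k zs} \<le> (\<Sum>\<tau>\<in>Bl n R \<sigma> \<inter> Pat n. Tk k \<tau>)"
proof -
  have "{zs \<in> Pl (n+k). Ck k zs} \<subseteq> (\<Union>\<tau>\<in>Bl n R \<sigma> \<inter> Pat n. {zs \<in> Pl (n+k). pat (take n zs) = \<tau> \<and> pat (take n (drop k zs)) \<in> Bl n R \<sigma>})"
    using pat_seg_Pat[of 0 n "n+k"] by (auto simp: Ck_def)
  moreover have "finite (\<Union>\<tau>\<in>Bl n R \<sigma> \<inter> Pat n. {zs \<in> Pl (n+k). pat (take n zs) = \<tau> \<and> pat (take n (drop k zs)) \<in> Bl n R \<sigma>})"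
    by (rule finite_subset[of _ "Pl (n+k)"]) (auto simp: finite_Pl)
  ultimately have "card {zs \<in> Pl (n+k). Ck k zs} \<le> card (\<Union>\<tau>\<in>Bl n R \<sigma> \<inter> Pat n. {zs \<in> Pl (n+k). pat (take n zs) = \<tau> \<and> pat (take n (drop k zs)) \<in> Bl n R \<sigma>})"
    using card_mono by blast
  also have "\<dots> \<le> (\<Sum>\<tau>\<in>Bl n R \<sigma> \<inter> Pat n. Tk k \<tau>)"
    unfolding Tk_def by (rule card_UN_le) (simp add: finite_Ball)
  finally show ?thesis .
qed

lemma Tk_eq:
  "Tk k \<tau> = card {zs \<in> Pl (n+k). pat (take n zs) = \<tau> \<and> pat (drop k zs) \<in> Bl n R \<sigma>}"
proof -
  have "{zs \<in> Pl (n+k). pat (take n zs) = \<tau> \<and> pat (take n (drop k zs)) \<in> Bl n R \<sigma>}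
      = {zs \<in> Pl (n+k). pat (take n zs) = \<tau> \<and> pat (drop k zs) \<in> Bl n R \<sigma>}"
    using Pl_length by (auto simp: Pl_length)
  then show ?thesis by (simp add: Tk_def)
qed

lemma Tk_small:
  assumes "k \<ge> 1" "\<tau> \<in> Pat n"
  shows "real (Tk k \<tau>) * fact n \<le> 4 * R * (k + 1) * fact (n + k - 1)"
proof -
  have a: "Tk k \<tau> \<le> 4 * R * (k + 1) * card {ys \<in> Pl (n+k-1). pat (take n ys) = \<tau>}"
    unfolding Tk_eq by (rule smallk[OF n1 assms(1) R1])
  have "fact n * card (F (n+k-1) 0 n \<tau>) = fact (n+k-1)"
    by (rule fiber_card) (use assms in auto)
  then have b: "fact n * card {ys \<in> Pl (n+k-1). pat (take n ys) = \<tau>} = fact (n+k-1)"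
    by (simp add: F_def)
  have "Tk k \<tau> * fact n \<le> 4 * R * (k + 1) * (fact n * card {ys \<in> Pl (n+k-1). pat (take n ys) = \<tau>})"
    using a by (simp add: mult.commute mult.left_commute)
  also have "\<dots> = 4 * R * (k + 1) * fact (n+k-1)" using b by simp
  finally have "Tk k \<tau> * fact n \<le> 4 * R * (k + 1) * (fact (n+k-1) :: nat)" .
  then have "real (Tk k \<tau> * fact n) \<le> real (4 * R * (k + 1) * fact (n+k-1))"
    by (simp only: of_nat_le_iff)
  then show ?thesis by (simp add: of_nat_mult)
qed

lemma Tk_large:
  assumes "k \<ge> 1" "k \<le> n"
  shows "Tk k \<tau> \<le> card (Bl n R \<sigma>) * 4 ^ k"
proof -
  have "{zs \<in> Pl (n+k). pat (take n zs) = \<tau> \<and> pat (drop k zs) \<in> Bl n R \<sigma>}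
     = (\<Union>\<tau>'\<in>Bl n R \<sigma>. {zs \<in> Pl (n+k). pat (take n zs) = \<tau> \<and> pat (drop k zs) = \<tau>'})" by auto
  then have "Tk k \<tau> = card (\<Union>\<tau>'\<in>Bl n R \<sigma>. {zs \<in> Pl (n+k). pat (take n zs) = \<tau> \<and> pat (drop k zs) = \<tau>'})"
    by (simp add: Tk_eq)
  also have "\<dots> \<le> (\<Sum>\<tau>'\<in>Bl n R \<sigma>. card {zs \<in> Pl (n+k). pat (take n zs) = \<tau> \<and> pat (drop k zs) = \<tau>'})"
    by (rule card_UN_le) (simp add: finite_Ball)
  also have "\<dots> \<le> (\<Sum>\<tau>'\<in>Bl n R \<sigma>. 4 ^ k)"
    by (intro sum_mono crude_bound assms)
  also have "\<dots> = card (Bl n R \<sigma>) * 4 ^ k" by simp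
  finally show ?thesis .
qed

end

definition tk :: "nat \<Rightarrow> nat \<Rightarrow> nat \<Rightarrow> real" where
  "tk n R k = (if k \<le> 2*R+1 then 4 * R * (k+1) / (n+k) else (R+1) * real n ^ (2*R) * 4 ^ k / real n ^ k)"

definition N0 :: "nat \<Rightarrow> nat" where
  "N0 R = 2 * ((2*R+1) * (4*R*(2*R+2)) + (R+1) * 4^(2*R+2)) + 4"

lemma tk_nonneg: "tk n R k \<ge> 0" by (simp add: tk_def)

lemma tk_bound:
  assumes "n \<ge> 4" "k \<ge> 1"
  shows "tk n R k \<le> (if k \<le> 2*R+1 then real (4*R*(2*R+2)) / n else 0) + real ((R+1) * 4^(2*R+2)) / (real n)^2"
proof (cases "k \<le> 2*R+1")
  case True
  have h1: "real (4*R*(k+1)) \<le> real (4*R*(2*R+2))"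
    by (simp only: of_nat_le_iff) (intro mult_le_mono2, use True in simp)
  have h2: "real (4*R*(k+1)) / real (n+k) \<le> real (4*R*(2*R+2)) / real n"
    by (rule frac_le) (use h1 assms in auto)
  have "tk n R k = real (4*R*(k+1)) / real (n+k)" using True by (simp add: tk_def algebra_simps)
  moreover have h3: "0 \<le> real ((R+1) * 4^(2*R+2)) / (real n)^2" by simp
  ultimately show ?thesis using h2 by (simp only: if_P[OF True]; linarith)
next
  case False
  then have "2*R+2 \<le> k" by simp
  then obtain e where e: "k = 2*R+2+e" using le_Suc_ex by blast
  have n0: "real n > 0" using assms by simp
  have "(R+1) * real n ^ (2*R) * 4 ^ k / real n ^ k = (R+1) * 4^(2*R+2) / (real n)^2 * (4^e / real n ^ e)"
    unfolding e using n0 by (simp add: power_add field_simps power2_eq_square)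
  also have "\<dots> \<le> (R+1) * 4^(2*R+2) / (real n)^2 * 1"
  proof (rule mult_left_mono)
    have "(4::real)^e \<le> real n ^ e" using assms by (intro power_mono) auto
    then show "4^e / real n ^ e \<le> (1::real)" using n0 by (simp add: divide_le_eq_1)
  qed simp
  finally show ?thesis using False by (simp add: tk_def add.commute)
qed

lemma sum_tk:
  assumes "n \<ge> N0 R"
  shows "(\<Sum>k\<in>{1..<n}. tk n R k) \<le> 1/2"
proof -
  define a where "a = real (4*R*(2*R+2))"
  define c where "c = real ((R+1) * 4^(2*R+2))"
  have n4: "n \<ge> 4" using assms by (simp add: N0_def)
  have n0: "real n > 0" using n4 by simp
  have "(\<Sum>k\<in>{1..<n}. tk n R k) \<le> (\<Sum>k\<in>{1..<n}. (if k \<in> {..2*R+1} then a / n else 0) + c / (real n)^2)"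
  proof (rule sum_mono)
    fix k assume "k \<in> {1..<n}"
    then show "tk n R k \<le> (if k \<in> {..2*R+1} then a / n else 0) + c / (real n)^2"
      using tk_bound[OF n4, of k R] by (simp only: a_def c_def atMost_iff atLeastLessThan_iff)
  qed
  also have "\<dots> = (\<Sum>k\<in>{1..<n} \<inter> {..2*R+1}. a / n) + (\<Sum>k\<in>{1..<n}. c / (real n)^2)"
    by (simp only: sum.distrib sum.inter_restrict[OF finite_atLeastLessThan])
  also have "(\<Sum>k\<in>{1..<n} \<inter> {..2*R+1}. a / n) = card ({1..<n} \<inter> {..2*R+1}) * (a / n)" by (rule sum_constant)
  also have "\<dots> \<le> (2*R+1) * (a / n)"
  proof (rule mult_right_mono)
    have "{1..<n} \<inter> {..2*R+1} \<subseteq> {1..2*R+1}" by auto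
    then have "card ({1..<n} \<inter> {..2*R+1}) \<le> card {1..2*R+1}" by (intro card_mono) auto
    then show "real (card ({1..<n} \<inter> {..2*R+1})) \<le> real (2*R+1)" by simp
  qed (simp add: a_def)
  also have "(\<Sum>k\<in>{1..<n}. c / (real n)^2) = (n - 1) * (c / (real n)^2)" by simp
  also have "\<dots> \<le> n * (c / (real n)^2)" by (intro mult_right_mono) (auto simp: c_def)
  also have "n * (c / (real n)^2) = c / n" using n0 by (simp add: power2_eq_square)
  finally have "(\<Sum>k\<in>{1..<n}. tk n R k) \<le> ((2*R+1) * a + c) / n" using n0 by (simp add: field_simps)
  also have "\<dots> \<le> 1/2"
  proof -
    have "2 * ((2*R+1) * (4*R*(2*R+2)) + (R+1) * 4^(2*R+2)) \<le> n" using assms by (simp add: N0_def)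
    then have "real (2 * ((2*R+1) * (4*R*(2*R+2)) + (R+1) * 4^(2*R+2))) \<le> real n" by (simp only: of_nat_le_iff)
    then have "2 * ((2*R+1) * a + c) \<le> real n" unfolding a_def c_def by (simp add: algebra_simps)
    then show ?thesis using n0 by (simp add: field_simps)
  qed
  finally show ?thesis .
qed


context
  fixes n R :: nat and \<sigma> :: "nat \<Rightarrow> nat"
  assumes n1: "n \<ge> 1" and R1: "R \<ge> 1"
begin

lemma LL_eq: "LL n = 2 * n - 1" using LL_def[OF n1 R1] .
lemma Aj_eq: "Aj n R \<sigma> j = {xs \<in> Pl (LL n). pat (take n (drop j xs)) \<in> Bl n R \<sigma>}"
  using Aj_def[OF n1 R1] by simp
lemma bb_eq: "bb n R \<sigma> = card (Bl n R \<sigma> \<inter> Pat n)" using bb_def[OF n1 R1] by simp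

lemma Qb_Aj:
  assumes "j < n"
  shows "real (card (Aj n R \<sigma> j)) = real (bb n R \<sigma>) * fact (LL n) / fact n"
proof -
  have "fact n * card (Aj n R \<sigma> j) = bb n R \<sigma> * fact (LL n)"
    by (rule card_Aj[OF n1 R1]) (use assms LL_eq in simp)
  then have "real (fact n * card (Aj n R \<sigma> j)) = real (bb n R \<sigma> * fact (LL n))" by simp
  then show ?thesis by (simp add: field_simps)
qed

lemma aux_cancel: "x6 \<noteq> 0 \<Longrightarrow> x4 \<noteq> 0 \<Longrightarrow> x5 \<noteq> 0 \<Longrightarrow>
   (x1::real) * (x2 * (x3 * x6)) / (x4 * (x5 * x6)) = x2 * x1 / x4 * (x3 / x5)"
  by (simp add: field_simps)

lemma pair_bound:
  assumes ij: "i < j" "j < n"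
  shows "real (card (Aj n R \<sigma> i \<inter> Aj n R \<sigma> j)) \<le> real (bb n R \<sigma>) * fact (LL n) / fact n * tk n R (j - i)"
proof -
  define k where "k = j - i"
  have k1: "k \<ge> 1" "k < n" and jk: "j = i + k" using ij by (auto simp: k_def)
  define T where "T = card {zs \<in> Pl (n+k). Ck n R \<sigma> k zs}"
  define B where "B = Bl n R \<sigma> \<inter> Pat n"
  have cp: "fact (n+k) * card (Aj n R \<sigma> i \<inter> Aj n R \<sigma> j) = fact (LL n) * T"
    unfolding T_def jk by (rule card_pair[OF n1 R1]) (use ij jk LL_eq in simp)
  have cpr: "real (card (Aj n R \<sigma> i \<inter> Aj n R \<sigma> j)) = fact (LL n) * real T / fact (n+k)"
  proof -
    have "real (fact (n+k) * card (Aj n R \<sigma> i \<inter> Aj n R \<sigma> j)) = real (fact (LL n) * T)"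
      using cp by simp
    then show ?thesis by (simp add: field_simps)
  qed
  have TS: "real T \<le> (\<Sum>\<tau>\<in>B. real (Tk n R \<sigma> k \<tau>))"
  proof -
    have "T \<le> (\<Sum>\<tau>\<in>B. Tk n R \<sigma> k \<tau>)" unfolding T_def B_def by (rule T_split[OF n1 R1])
    then show ?thesis by (metis of_nat_le_iff of_nat_sum)
  qed
  have bbB: "bb n R \<sigma> = card B" by (simp add: bb_eq B_def)
  have finB: "finite B" by (simp add: B_def finite_Ball)
  have fpos: "(fact (n+k) :: real) > 0" "(fact n :: real) > 0" "(fact (LL n) :: real) > 0" by auto
  show ?thesis
  proof (cases "k \<le> 2*R+1")
    case True
    have "real T * fact n \<le> (\<Sum>\<tau>\<in>B. real (Tk n R \<sigma> k \<tau>) * fact n)"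
    proof -
      have "real T * fact n \<le> (\<Sum>\<tau>\<in>B. real (Tk n R \<sigma> k \<tau>)) * fact n"
        using TS fpos by (intro mult_right_mono) auto
      also have "\<dots> = (\<Sum>\<tau>\<in>B. real (Tk n R \<sigma> k \<tau>) * fact n)" by (rule sum_distrib_right)
      finally show ?thesis .
    qed
    also have "\<dots> \<le> (\<Sum>\<tau>\<in>B. (4 * R * (k + 1) * fact (n + k - 1) :: real))"
      by (rule sum_mono, rule Tk_small[OF n1 R1 k1(1)]) (simp add: B_def)
    also have "\<dots> = real (bb n R \<sigma>) * (4 * R * (k + 1) * fact (n + k - 1))" by (simp add: bbB)
    finally have Tb: "real T * fact n \<le> real (bb n R \<sigma>) * (4 * R * (k + 1) * fact (n + k - 1))" .
    have fs: "(fact (n+k) :: real) = real (n+k) * fact (n+k-1)"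
    proof -
      have "n + k = Suc (n + k - 1)" using n1 by simp
      then have "(fact (n+k) :: real) = fact (Suc (n+k-1))" by simp
      also have "\<dots> = real (Suc (n+k-1)) * fact (n+k-1)" by (rule fact_Suc)
      finally show ?thesis using n1 by simp
    qed
    have "real (card (Aj n R \<sigma> i \<inter> Aj n R \<sigma> j)) = fact (LL n) * (real T * fact n) / (fact n * fact (n+k))"
      using cpr fpos by (simp add: field_simps)
    also have "\<dots> \<le> fact (LL n) * (real (bb n R \<sigma>) * (4 * R * (k + 1) * fact (n + k - 1))) / (fact n * fact (n+k))"
      by (intro divide_right_mono mult_left_mono Tb) (use fpos in auto)
    also have "\<dots> = real (bb n R \<sigma>) * fact (LL n) / fact n * (4 * R * (k+1) / real (n+k))"
    proof -
      have f3: "(fact (n+k-1)::real) \<noteq> 0" "(fact n::real) \<noteq> 0" "real (n+k) \<noteq> 0" using n1 by auto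
      show ?thesis unfolding fs of_nat_mult of_nat_fact by (rule aux_cancel[OF f3])
    qed
    also have "4 * R * (k+1) / real (n+k) = tk n R (j - i)" using True by (simp add: tk_def k_def[symmetric] algebra_simps)
    finally show ?thesis .
  next
    case False
    have cb: "real (card (Bl n R \<sigma>)) \<le> (R+1) * real n ^ (2*R)"
    proof -
      have "card (Bl n R \<sigma>) \<le> (R+1) * n^(2*R)" by (rule card_Ball_upper[OF n1])
      then show ?thesis by (metis of_nat_le_iff of_nat_mult of_nat_power of_nat_add of_nat_1)
    qed
    have "real T \<le> (\<Sum>\<tau>\<in>B. real (card (Bl n R \<sigma>) * 4 ^ k))"
      using TS by (rule order.trans) (intro sum_mono, simp only: of_nat_le_iff, rule Tk_large[OF n1 R1 k1(1)], use k1 in simp)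
    also have "\<dots> = real (bb n R \<sigma>) * (real (card (Bl n R \<sigma>)) * 4 ^ k)" by (simp add: bbB)
    also have "\<dots> \<le> real (bb n R \<sigma>) * ((R+1) * real n ^ (2*R) * 4 ^ k)"
      by (intro mult_left_mono mult_right_mono cb) auto
    finally have Tb: "real T \<le> real (bb n R \<sigma>) * ((R+1) * real n ^ (2*R) * 4 ^ k)" .
    have fg: "fact n * real n ^ k \<le> fact (n+k)"
    proof -
      have "fact n * n ^ k \<le> (fact (n + k) :: nat)" by (rule fact_ge_pow)
      then have "real (fact n * n ^ k) \<le> real (fact (n + k))" by (simp only: of_nat_le_iff)
      then show ?thesis by simp
    qed
    have np: "real n ^ k > 0" using n1 by simp
    have "real (card (Aj n R \<sigma> i \<inter> Aj n R \<sigma> j)) \<le> fact (LL n) * (real (bb n R \<sigma>) * ((R+1) * real n ^ (2*R) * 4 ^ k)) / fact (n+k)"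
      unfolding cpr by (intro divide_right_mono mult_left_mono Tb) (use fpos in auto)
    also have "\<dots> \<le> fact (LL n) * (real (bb n R \<sigma>) * ((R+1) * real n ^ (2*R) * 4 ^ k)) / (fact n * real n ^ k)"
      by (rule divide_left_mono[OF fg]) (use fpos np in auto)
    also have "\<dots> = real (bb n R \<sigma>) * fact (LL n) / fact n * ((R+1) * real n ^ (2*R) * 4 ^ k / real n ^ k)"
      by (simp add: field_simps)
    also have "(R+1) * real n ^ (2*R) * 4 ^ k / real n ^ k = tk n R (j - i)"
      using False by (simp add: tk_def k_def[symmetric])
    finally show ?thesis .
  qed
qed

end

lemma sum_diff_reindex:
  fixes g :: "nat \<Rightarrow> real"
  shows "(\<Sum>i<j. g (j - i)) = (\<Sum>k\<in>{1..j}. g k)"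
proof -
  have inj: "inj_on (\<lambda>i. j - i) {..<j}" by (auto simp: inj_on_def)
  have img: "(\<lambda>i. j - i) ` {..<j} = {1..j}"
  proof
    show "(\<lambda>i. j - i) ` {..<j} \<subseteq> {1..j}" by auto
    show "{1..j} \<subseteq> (\<lambda>i. j - i) ` {..<j}"
    proof
      fix k assume "k \<in> {1..j}"
      then have "j - k < j" "j - (j - k) = k" by auto
      then show "k \<in> (\<lambda>i. j - i) ` {..<j}" by (metis image_eqI lessThan_iff)
    qed
  qed
  have "(\<Sum>k\<in>{1..j}. g k) = (\<Sum>k\<in>(\<lambda>i. j - i) ` {..<j}. g k)" by (simp only: img)
  also have "\<dots> = (\<Sum>i<j. g (j - i))" by (simp add: sum.reindex[OF inj])
  finally show ?thesis by simp
qed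

context
  fixes n R :: nat and \<sigma> :: "nat \<Rightarrow> nat"
  assumes n1: "n \<ge> 1" and R1: "R \<ge> 1"
begin

lemma cover_lower:
  assumes nN: "n \<ge> N0 R"
  shows "real (card (\<Union>j<n. Aj n R \<sigma> j)) \<ge> real n * (real (bb n R \<sigma>) * fact (LL n) / fact n) / 2"
proof -
  define Qb where "Qb = real (bb n R \<sigma>) * fact (LL n) / fact n"
  have Q0: "Qb \<ge> 0" by (simp add: Qb_def)
  have B: "real (card (\<Union>j<n. Aj n R \<sigma> j)) \<ge> (\<Sum>j<n. real (card (Aj n R \<sigma> j))) - (\<Sum>j<n. \<Sum>i<j. real (card (Aj n R \<sigma> i \<inter> Aj n R \<sigma> j)))"
    by (rule bonf) (rule finite_Aj[OF n1 R1])
  have S1: "(\<Sum>j<n. real (card (Aj n R \<sigma> j))) = real n * Qb"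
    using Qb_Aj[OF n1 R1] by (simp add: Qb_def)
  have st: "(\<Sum>k\<in>{1..<n}. tk n R k) \<le> 1/2" by (rule sum_tk[OF nN])
  have S2: "(\<Sum>i<j. real (card (Aj n R \<sigma> i \<inter> Aj n R \<sigma> j))) \<le> Qb / 2" if j: "j < n" for j
  proof -
    have "(\<Sum>i<j. real (card (Aj n R \<sigma> i \<inter> Aj n R \<sigma> j))) \<le> (\<Sum>i<j. Qb * tk n R (j - i))"
      using pair_bound[OF n1 R1 _ j] by (intro sum_mono) (simp add: Qb_def)
    also have "\<dots> = Qb * (\<Sum>i<j. tk n R (j - i))" by (simp add: sum_distrib_left)
    also have "(\<Sum>i<j. tk n R (j - i)) = (\<Sum>k\<in>{1..j}. tk n R k)" by (rule sum_diff_reindex)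
    also have "(\<Sum>k\<in>{1..j}. tk n R k) \<le> (\<Sum>k\<in>{1..<n}. tk n R k)"
      by (rule sum_mono2) (use j tk_nonneg in auto)
    finally have "(\<Sum>i<j. real (card (Aj n R \<sigma> i \<inter> Aj n R \<sigma> j))) \<le> Qb * (\<Sum>k\<in>{1..<n}. tk n R k)"
      using Q0 by (simp add: mult_left_mono)
    also have "\<dots> \<le> Qb * (1/2)" using st Q0 by (intro mult_left_mono) auto
    finally show ?thesis by simp
  qed
  have "(\<Sum>j<n. \<Sum>i<j. real (card (Aj n R \<sigma> i \<inter> Aj n R \<sigma> j))) \<le> (\<Sum>j<n. Qb / 2)"
    using S2 by (intro sum_mono) auto
  also have "\<dots> = real n * Qb / 2" by simp
  finally show ?thesis using B S1 by (simp add: Qb_def)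
qed

end

definition LLn :: "nat \<Rightarrow> nat" where "LLn n = 2 * n - 1"
definition covS :: "nat \<Rightarrow> nat \<Rightarrow> nat list \<Rightarrow> (nat \<Rightarrow> nat) set" where
  "covS n R xs = {\<sigma> \<in> Pat n. \<exists>j<n. pat (take n (drop j xs)) \<in> Bl n R \<sigma>}"
definition beta :: "nat \<Rightarrow> nat \<Rightarrow> nat" where "beta n R = (n div (2*R)) ^ (2*R)"
definition qq :: "nat \<Rightarrow> nat \<Rightarrow> real" where "qq n R = real n * real (beta n R) / (2 * fact n)"

lemma N0_ge: "N0 R \<ge> 4" by (simp add: N0_def)

lemma cov_count:
  assumes R1: "R \<ge> 1" and nN: "n \<ge> N0 R" and s: "\<sigma> \<in> Pat n"
  shows "real (card {xs \<in> Pl (LLn n). \<sigma> \<in> covS n R xs}) \<ge> qq n R * fact (LLn n)"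
proof -
  have n1: "n \<ge> 1" using nN N0_ge[of R] by simp
  have LL: "LL n = LLn n" using LL_eq[OF n1 R1] by (simp add: LLn_def)
  have eq: "{xs \<in> Pl (LLn n). \<sigma> \<in> covS n R xs} = (\<Union>j<n. Aj n R \<sigma> j)"
    using s by (auto simp: covS_def Aj_eq[OF n1 R1] LL)
  have bb: "real (beta n R) \<le> real (bb n R \<sigma>)"
    using card_Ball_lower[OF R1 s] by (simp add: bb_eq[OF n1 R1] beta_def)
  have "qq n R * fact (LLn n) = real n * (real (beta n R) * fact (LL n) / fact n) / 2"
    by (simp add: qq_def LL field_simps)
  also have "\<dots> \<le> real n * (real (bb n R \<sigma>) * fact (LL n) / fact n) / 2"
    using bb by (intro divide_right_mono mult_left_mono) auto
  also have "\<dots> \<le> real (card (\<Union>j<n. Aj n R \<sigma> j))" by (rule cover_lower[OF n1 R1 nN])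
  finally show ?thesis using eq by simp
qed

lemma avg_exists:
  fixes f :: "'a \<Rightarrow> real"
  assumes "finite A" "A \<noteq> {}" "real (card A) * c \<le> (\<Sum>x\<in>A. f x)"
  shows "\<exists>x\<in>A. c \<le> f x"
proof (rule ccontr)
  assume "\<not> (\<exists>x\<in>A. c \<le> f x)"
  then have "\<And>x. x \<in> A \<Longrightarrow> f x < c" by auto
  then have "(\<Sum>x\<in>A. f x) < (\<Sum>x\<in>A. c)" using assms by (intro sum_strict_mono) auto
  then show False using assms(3) by simp
qed

lemma greedy_exists:
  assumes R1: "R \<ge> 1" and nN: "n \<ge> N0 R" and U: "U \<subseteq> Pat n"
  shows "\<exists>xs\<in>Pl (LLn n). qq n R * card U \<le> card (covS n R xs \<inter> U)"
proof -
  have finU: "finite U" by (rule finite_subset[OF U finite_Pat])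
  have "(\<Sum>xs\<in>Pl (LLn n). real (card (covS n R xs \<inter> U))) = (\<Sum>xs\<in>Pl (LLn n). \<Sum>\<sigma>\<in>U. of_bool (\<sigma> \<in> covS n R xs))"
  proof (rule sum.cong)
    fix xs show "real (card (covS n R xs \<inter> U)) = (\<Sum>\<sigma>\<in>U. of_bool (\<sigma> \<in> covS n R xs))"
      using finU by (simp add: Int_commute Int_def)
  qed simp
  also have "\<dots> = (\<Sum>\<sigma>\<in>U. \<Sum>xs\<in>Pl (LLn n). of_bool (\<sigma> \<in> covS n R xs))" by (rule sum.swap)
  also have "\<dots> = (\<Sum>\<sigma>\<in>U. real (card {xs \<in> Pl (LLn n). \<sigma> \<in> covS n R xs}))"
    by (intro sum.cong) (simp_all add: finite_Pl Int_def)
  also have "\<dots> \<ge> (\<Sum>\<sigma>\<in>U. qq n R * fact (LLn n))"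
    using cov_count[OF R1 nN] U by (intro sum_mono) auto
  finally have "real (card (Pl (LLn n))) * (qq n R * real (card U)) \<le> (\<Sum>xs\<in>Pl (LLn n). real (card (covS n R xs \<inter> U)))"
    by (simp add: card_Pl algebra_simps)
  moreover have "Pl (LLn n) \<noteq> {}" using map_perm_Pl[of id "LLn n"] by auto
  ultimately show ?thesis using avg_exists[of "Pl (LLn n)"] finite_Pl by blast
qed

definition ch :: "nat \<Rightarrow> nat \<Rightarrow> (nat \<Rightarrow> nat) set \<Rightarrow> nat list" where
  "ch n R U = (SOME xs. xs \<in> Pl (LLn n) \<and> (R \<ge> 1 \<and> n \<ge> N0 R \<and> U \<subseteq> Pat n \<longrightarrow> qq n R * card U \<le> card (covS n R xs \<inter> U)))"

lemma ch_props:
  "ch n R U \<in> Pl (LLn n) \<and> (R \<ge> 1 \<and> n \<ge> N0 R \<and> U \<subseteq> Pat n \<longrightarrow> qq n R * card U \<le> card (covS n R (ch n R U) \<inter> U))"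
proof -
  have "\<exists>xs. xs \<in> Pl (LLn n) \<and> (R \<ge> 1 \<and> n \<ge> N0 R \<and> U \<subseteq> Pat n \<longrightarrow> qq n R * card U \<le> card (covS n R xs \<inter> U))"
  proof (cases "R \<ge> 1 \<and> n \<ge> N0 R \<and> U \<subseteq> Pat n")
    case True then show ?thesis using greedy_exists by blast
  next
    case False then show ?thesis using map_perm_Pl[of id "LLn n"] by auto
  qed
  then show ?thesis unfolding ch_def by (rule someI_ex)
qed

primrec Ust :: "nat \<Rightarrow> nat \<Rightarrow> nat \<Rightarrow> (nat \<Rightarrow> nat) set" where
  "Ust n R 0 = Pat n"
| "Ust n R (Suc s) = Ust n R s - covS n R (ch n R (Ust n R s))"

lemma Ust_sub: "Ust n R s \<subseteq> Pat n" by (induction s) auto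

lemma qq_le1:
  assumes R1: "R \<ge> 1" and nN: "n \<ge> N0 R"
  shows "qq n R \<le> 1"
proof -
  have "id \<in> Pat n" by (simp add: Pat_def permutes_id)
  then have "qq n R * fact (LLn n) \<le> real (card {xs \<in> Pl (LLn n). id \<in> covS n R xs})"
    by (rule cov_count[OF R1 nN])
  also have "\<dots> \<le> real (card (Pl (LLn n)))" by (intro of_nat_mono card_mono) (auto simp: finite_Pl)
  also have "\<dots> = fact (LLn n)" by (simp add: card_Pl)
  finally show ?thesis by simp
qed

lemma Ust_card:
  assumes R1: "R \<ge> 1" and nN: "n \<ge> N0 R"
  shows "real (card (Ust n R s)) \<le> (1 - qq n R) ^ s * fact n"
proof (induction s)
  case 0 then show ?case by (simp add: card_Pat)
next
  case (Suc s)
  let ?U = "Ust n R s" and ?C = "covS n R (ch n R (Ust n R s))"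
  have finU: "finite ?U" by (rule finite_subset[OF Ust_sub finite_Pat])
  have h: "qq n R * card ?U \<le> card (?C \<inter> ?U)" using ch_props[of n R ?U] R1 nN Ust_sub[of n R s] by simp
  have "card (Ust n R (Suc s)) = card ?U - card (?C \<inter> ?U)"
    using finU by (simp add: card_Diff_subset_Int Int_commute)
  moreover have "card (?C \<inter> ?U) \<le> card ?U" using finU by (intro card_mono) auto
  ultimately have "real (card (Ust n R (Suc s))) = real (card ?U) - real (card (?C \<inter> ?U))" by simp
  also have "\<dots> \<le> (1 - qq n R) * real (card ?U)" using h by (simp add: algebra_simps)
  also have "\<dots> \<le> (1 - qq n R) * ((1 - qq n R) ^ s * fact n)"
    using Suc qq_le1[OF R1 nN] by (intro mult_left_mono) auto
  finally show ?case by simp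
qed


definition KK :: "nat \<Rightarrow> nat \<Rightarrow> nat" where
  "KK n R = nat \<lceil>(2*R+1) * ln (real n) / qq n R\<rceil>"

definition ul :: "nat \<Rightarrow> nat \<Rightarrow> (nat \<Rightarrow> nat) list" where
  "ul n R = (SOME xs. set xs = Ust n R (KK n R) \<and> distinct xs)"

definition Mf :: "nat \<Rightarrow> nat \<Rightarrow> nat" where
  "Mf n R = KK n R * LLn n + length (ul n R) * n + 1"

definition Sf :: "nat \<Rightarrow> nat \<Rightarrow> nat \<Rightarrow> real" where
  "Sf n R t = (if t < KK n R * LLn n then real (ch n R (Ust n R (t div LLn n)) ! (t mod LLn n))
     else if t < KK n R * LLn n + length (ul n R) * n
       then real ((ul n R ! ((t - KK n R * LLn n) div n)) ((t - KK n R * LLn n) mod n))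
     else 0)"

lemma ul_props: "set (ul n R) = Ust n R (KK n R)" "distinct (ul n R)"
proof -
  have "finite (Ust n R (KK n R))" by (rule finite_subset[OF Ust_sub finite_Pat])
  then have "\<exists>xs. set xs = Ust n R (KK n R) \<and> distinct xs" by (rule finite_distinct_list)
  then have "set (ul n R) = Ust n R (KK n R) \<and> distinct (ul n R)" unfolding ul_def by (rule someI_ex)
  then show "set (ul n R) = Ust n R (KK n R)" "distinct (ul n R)" by auto
qed

lemma ot_lemma:
  assumes "\<And>q. q < n \<Longrightarrow> w q = real (ys ! q)" "length ys = n"
  shows "order_type n w = pat ys"
proof
  fix p
  show "order_type n w p = pat ys p"
  proof (cases "p < n")
    case True
    have "{k. k < n \<and> w k < w p} = {q. q < length ys \<and> ys!q < ys!p}"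
      using assms True by auto
    then show ?thesis using True assms(2) by (simp add: order_type_def pat_def)
  qed (use assms in \<open>simp add: order_type_def pat_def\<close>)
qed

lemma ot_inj:
  assumes "\<And>q. q < n \<Longrightarrow> w q = real (ys ! q)" "length ys = n" "distinct ys"
  shows "inj_on w {0..<n}"
proof (rule inj_onI)
  fix a b assume ab: "a \<in> {0..<n}" "b \<in> {0..<n}" "w a = w b"
  then have "ys!a = ys!b" using assms(1) by simp
  then show "a = b" using ab assms(2,3) by (simp add: nth_eq_iff_index_eq)
qed

lemma Ust_exit:
  assumes "\<sigma> \<in> Ust n R 0" "\<sigma> \<notin> Ust n R K"
  shows "\<exists>s<K. \<sigma> \<in> Ust n R s \<and> \<sigma> \<notin> Ust n R (Suc s)"
  using assms(2)
proof (induction K)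
  case 0 then show ?case using assms(1) by simp
next
  case (Suc K)
  show ?case
  proof (cases "\<sigma> \<in> Ust n R K")
    case True then show ?thesis using Suc.prems by auto
  next
    case False then show ?thesis using Suc.IH by (meson less_SucI)
  qed
qed

lemma pd_self: "perm_dist n \<sigma> \<sigma> \<le> R"
proof -
  have "perm_dist n \<sigma> \<sigma> \<le> 0" unfolding perm_dist_def by (rule Least_le) auto
  then show ?thesis by simp
qed

lemma covers: "R_covers R n (Mf n R) (Sf n R)"
  unfolding R_covers_def
proof (intro allI impI)
  fix \<sigma> assume sp: "\<sigma> permutes {0..<n}"
  then have sP: "\<sigma> \<in> Pat n" by (simp add: Pat_def)
  let ?K = "KK n R" and ?L = "LLn n" and ?M = "Mf n R" and ?S = "Sf n R" and ?u = "length (ul n R)"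
  show "\<exists>i<?M. inj_on (cyc_word ?M ?S i) {0..<n} \<and> perm_dist n \<sigma> (order_type n (cyc_word ?M ?S i)) \<le> R"
  proof (cases "\<sigma> \<in> Ust n R ?K")
    case True
    then obtain a where a: "a < ?u" "ul n R ! a = \<sigma>" using ul_props(1) by (metis in_set_conv_nth)
    define i where "i = ?K * ?L + a * n"
    have an: "a * n + q < ?u * n" if "q < n" for q
    proof -
      have "a * n + q < a * n + n" using that by simp
      also have "\<dots> = (a + 1) * n" by simp
      also have "\<dots> \<le> ?u * n" using a(1) by (intro mult_le_mono1) simp
      finally show ?thesis .
    qed
    have w: "cyc_word ?M ?S i q = real (map \<sigma> [0..<n] ! q)" if q: "q < n" for q
    proof -
      have lt: "i + q < ?M" using an[OF q] by (simp add: i_def Mf_def)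
      have "cyc_word ?M ?S i q = ?S (i + q)" using lt by (simp add: cyc_word_def)
      also have "\<dots> = real ((ul n R ! a) q)"
      proof -
        have d: "(a * n + q) div n = a" "(a * n + q) mod n = q" using q by auto
        show ?thesis using an[OF q] d by (simp add: Sf_def i_def)
      qed
      finally show ?thesis using a q by simp
    qed
    have i: "i < ?M"
    proof (cases "n = 0")
      case True then show ?thesis by (simp add: i_def Mf_def)
    next
      case False then have "a * n + 0 < ?u * n" by (intro an) simp
      then show ?thesis unfolding i_def Mf_def by linarith
    qed
    have ot: "order_type n (cyc_word ?M ?S i) = \<sigma>"
      using ot_lemma[OF w] pat_map_perm[OF sp] by simp
    have inj: "inj_on (cyc_word ?M ?S i) {0..<n}"
      by (rule ot_inj[OF w]) (use map_perm_Pl[OF sp] in \<open>auto simp: Pl_iff\<close>)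
    show ?thesis using i ot inj pd_self by auto
  next
    case False
    have "\<sigma> \<in> Ust n R 0" using sP by simp
    then obtain s where s: "s < ?K" "\<sigma> \<in> Ust n R s" "\<sigma> \<notin> Ust n R (Suc s)"
      using Ust_exit False by blast
    define xs where "xs = ch n R (Ust n R s)"
    have cov: "\<sigma> \<in> covS n R xs" using s by (simp add: xs_def)
    then obtain j where j: "j < n" "pat (take n (drop j xs)) \<in> Bl n R \<sigma>" by (auto simp: covS_def)
    have xsP: "xs \<in> Pl ?L" using ch_props by (simp add: xs_def)
    have lx: "length xs = ?L" using Pl_length[OF xsP] .
    have L1: "?L = 2 * n - 1" by (simp add: LLn_def)
    define i where "i = s * ?L + j"
    have w: "cyc_word ?M ?S i q = real (take n (drop j xs) ! q)" if q: "q < n" for q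
    proof -
      have jq: "j + q < ?L" using j q L1 by simp
      have "s * ?L + (j + q) < s * ?L + ?L" using jq by simp
      also have "\<dots> = (s + 1) * ?L" by simp
      also have "\<dots> \<le> ?K * ?L" using s(1) by (intro mult_le_mono1) simp
      finally have lt: "i + q < ?K * ?L" by (simp add: i_def)
      then have "i + q < ?M" by (simp add: Mf_def)
      then have "cyc_word ?M ?S i q = ?S (i + q)" by (simp add: cyc_word_def)
      also have "\<dots> = real (xs ! (j + q))"
      proof -
        have d: "(s * ?L + (j + q)) div ?L = s" "(s * ?L + (j + q)) mod ?L = j + q" using jq by auto
        show ?thesis using lt d by (simp add: Sf_def i_def xs_def add.assoc)
      qed
      finally show ?thesis using jq lx q by simp
    qed
    have lw: "length (take n (drop j xs)) = n" using lx L1 j by simp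
    have dw: "distinct (take n (drop j xs))" using xsP by (simp add: Pl_iff distinct_drop distinct_take)
    have i: "i < ?M"
    proof -
      have "i + 0 < ?K * ?L"
      proof -
        have jq: "j < ?L" using j L1 by simp
        have "s * ?L + j < s * ?L + ?L" using jq by simp
        also have "\<dots> = (s + 1) * ?L" by simp
        also have "\<dots> \<le> ?K * ?L" using s(1) by (intro mult_le_mono1) simp
        finally show ?thesis by (simp add: i_def)
      qed
      then show ?thesis by (simp add: Mf_def)
    qed
    have ot: "order_type n (cyc_word ?M ?S i) = pat (take n (drop j xs))" by (rule ot_lemma[OF w lw])
    have inj: "inj_on (cyc_word ?M ?S i) {0..<n}" by (rule ot_inj[OF w lw dw])
    show ?thesis using i ot inj Ball_dist[OF j(2)] by auto
  qed
qed


context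
  fixes n R :: nat
  assumes R1: "R \<ge> 1" and nN: "n \<ge> N0 R"
begin

lemma n_big: "n \<ge> 4 * R" "n \<ge> 3"
proof -
  have "4 * R \<le> (2*R+1) * (4*R*(2*R+2))" using R1 by (simp add: algebra_simps)
  then have "4 * R \<le> N0 R" by (simp add: N0_def)
  then show "n \<ge> 4 * R" using nN by simp
  show "n \<ge> 3" using nN N0_ge[of R] by simp
qed

lemma ln_ge1: "ln (real n) \<ge> 1"
proof -
  have "ln (exp 1) \<le> ln (3::real)" using exp_le by (subst ln_le_cancel_iff) auto
  also have "\<dots> \<le> ln (real n)" using n_big(2) by (subst ln_le_cancel_iff) auto
  finally show ?thesis by simp
qed

lemma beta_lower: "real (beta n R) \<ge> real n ^ (2*R) / (4*R) ^ (2*R)"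
proof -
  define d where "d = 2 * R"
  have d0: "d > 0" using R1 by (simp add: d_def)
  have "n < d * (n div d + 1)"
  proof -
    have e: "d * (n div d) + n mod d = n" by simp
    have m: "n mod d < d" using d0 by simp
    have "d * (n div d + 1) = d * (n div d) + d" by simp
    then show ?thesis using e m by linarith
  qed
  then have "real n < real d * (real (n div d) + 1)" by (metis of_nat_1 of_nat_add of_nat_less_iff of_nat_mult)
  then have a: "real n / real d - 1 < real (n div d)" using d0 by (simp add: field_simps)
  have "real n / real d - 1 \<ge> real n / (2 * real d)"
  proof -
    have "real n \<ge> 2 * real d" using n_big(1) by (simp add: d_def)
    then show ?thesis using d0 by (simp add: field_simps)
  qed
  with a have b: "real n / (2 * real d) \<le> real (n div d)" by simp
  have "real n ^ (2*R) / (4*R) ^ (2*R) = (real n / (2 * real d)) ^ (2*R)"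
    by (simp add: d_def power_divide)
  also have "\<dots> \<le> real (n div d) ^ (2*R)" by (rule power_mono[OF b]) simp
  also have "\<dots> = real (beta n R)" by (simp add: beta_def d_def)
  finally show ?thesis .
qed

lemma beta_upper: "real (beta n R) \<le> real n ^ (2*R)"
proof -
  have "n div (2*R) \<le> n" by simp
  then have "(n div (2*R)) ^ (2*R) \<le> n ^ (2*R)" by (rule power_mono) simp
  then show ?thesis by (simp add: beta_def) (metis of_nat_le_iff of_nat_power)
qed

lemma beta_pos: "real (beta n R) > 0"
proof -
  have "real n ^ (2*R) / (4*R) ^ (2*R) > 0" using n_big R1 by simp
  then show ?thesis using beta_lower by linarith
qed

lemma qq_pos: "qq n R > 0" using beta_pos n_big by (simp add: qq_def)

definition xx where "xx = (2*R+1) * ln (real n) / qq n R"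

lemma xx_ge: "xx \<ge> 1 / qq n R" "xx \<ge> 1"
proof -
  have a: "1 \<le> 2 * real R + 1" by simp
  have "1 * 1 \<le> (2 * real R + 1) * ln (real n)" by (rule mult_mono[OF a ln_ge1]) auto
  then have "(2*R+1) * ln (real n) \<ge> 1" by (simp add: algebra_simps)
  then show "xx \<ge> 1 / qq n R" unfolding xx_def using qq_pos by (simp add: divide_right_mono)
  have "1 / qq n R \<ge> 1" using qq_pos qq_le1[OF R1 nN] by simp
  then show "xx \<ge> 1" using \<open>xx \<ge> 1 / qq n R\<close> by simp
qed

lemma KK_bounds: "real (KK n R) \<ge> xx" "real (KK n R) \<le> 2 * xx"
proof -
  have k: "KK n R = nat \<lceil>xx\<rceil>" by (simp add: KK_def xx_def add.commute)
  have "xx \<ge> 0" using xx_ge(2) by simp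
  then have "\<lceil>xx\<rceil> \<ge> 0" by simp
  then have "real (KK n R) = real_of_int \<lceil>xx\<rceil>" unfolding k by simp
  then show "real (KK n R) \<ge> xx" "real (KK n R) \<le> 2 * xx"
    using xx_ge(2) by (auto intro: le_of_int_ceiling) (smt (verit) of_int_ceiling_le_add_one)
qed

lemma u_bound: "real (length (ul n R)) \<le> fact n / real n ^ (2*R+1)"
proof -
  let ?q = "qq n R" and ?K = "KK n R"
  have len: "length (ul n R) = card (Ust n R ?K)" using ul_props by (metis distinct_card)
  have "real (card (Ust n R ?K)) \<le> (1 - ?q) ^ ?K * fact n" by (rule Ust_card[OF R1 nN])
  also have "(1 - ?q) ^ ?K \<le> exp (- ?q) ^ ?K"
    by (rule power_mono) (use qq_le1[OF R1 nN] exp_ge_add_one_self[of "- ?q"] in auto)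
  also have "exp (- ?q) ^ ?K = exp (- (?q * real ?K))" by (simp add: exp_of_nat_mult[symmetric] algebra_simps)
  also have "\<dots> \<le> exp (- ((2*R+1) * ln (real n)))"
  proof -
    have "?q * xx \<le> ?q * real ?K" using KK_bounds(1) qq_pos by (intro mult_left_mono) auto
    moreover have "?q * xx = (2*R+1) * ln (real n)" using qq_pos by (simp add: xx_def)
    ultimately show ?thesis by simp
  qed
  also have "\<dots> = 1 / real n ^ (2*R+1)"
  proof -
    have n0: "real n > 0" using n_big by simp
    have "ln (real n ^ (2*R+1)) = (2*R+1) * ln (real n)" by (subst ln_realpow) (simp add: algebra_simps)
    then have "exp ((2*R+1) * ln (real n)) = exp (ln (real n ^ (2*R+1)))" by simp
    also have "\<dots> = real n ^ (2*R+1)" using n0 by simp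
    finally show ?thesis by (simp add: exp_minus')
  qed
  finally show ?thesis using len by simp
qed

lemma M_lower: "fact n / real n ^ (2*R) \<le> real (Mf n R)"
proof -
  have L: "real (LLn n) = 2 * real n - 1" using n_big by (simp add: LLn_def)
  have "fact n / real n ^ (2*R) \<le> 2 * fact n * real (LLn n) / (real n * real n ^ (2*R))"
  proof -
    have n0: "real n > 0" using n_big by simp
    have "real n \<le> 2 * real (LLn n)" using L n_big by simp
    then show ?thesis using n0 by (simp add: field_simps)
  qed
  also have "\<dots> \<le> 2 * fact n * real (LLn n) / (real n * real (beta n R))"
    using beta_upper beta_pos n_big by (intro divide_left_mono mult_left_mono) (auto simp: L)
  also have "\<dots> = real (LLn n) / qq n R" using beta_pos n_big by (simp add: qq_def field_simps)
  also have "\<dots> \<le> xx * real (LLn n)" using xx_ge(1) qq_pos L n_big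
    by (simp add: divide_le_eq field_simps)
  also have "\<dots> \<le> real (KK n R) * real (LLn n)" using KK_bounds(1) by (intro mult_right_mono) auto
  also have "\<dots> \<le> real (Mf n R)" by (simp add: Mf_def)
  finally show ?thesis .
qed

definition CC where "CC = 10 * (2*R+1) * (4*R)^(2*R) + 1"

lemma M_upper: "real (Mf n R) \<le> CC * (fact n * ln (real n) / real n ^ (2*R))"
proof -
  have n0: "real n > 0" using n_big by simp
  have L: "real (LLn n) \<le> 2 * real n" by (simp add: LLn_def)
  let ?A = "fact n * ln (real n) / real n ^ (2*R)"
  have "real (Mf n R) = real (KK n R) * real (LLn n) + real (length (ul n R)) * real n + 1"
    by (simp add: Mf_def)
  also have "\<dots> \<le> 2 * xx * (2 * real n) + fact n / real n ^ (2*R+1) * real n + xx * real n"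
  proof -
    have a: "real (KK n R) * real (LLn n) \<le> 2 * xx * (2 * real n)"
      using KK_bounds L xx_ge by (intro mult_mono) auto
    have b: "real (length (ul n R)) * real n \<le> fact n / real n ^ (2*R+1) * real n"
      using u_bound n0 by (intro mult_right_mono) auto
    have c: "1 \<le> xx * real n" using xx_ge(2) n_big by (metis mult_le_cancel_left1 mult.commute of_nat_1 of_nat_le_iff le_trans one_le_numeral order.trans numeral_le_iff semiring_norm(68) mult_1 less_le_not_le not_one_le_zero) 
    show ?thesis using a b c by linarith
  qed
  also have "\<dots> = 5 * (xx * real n) + fact n / real n ^ (2*R)" using n0 by (simp add: field_simps)
  also have "xx * real n = 2 * (2*R+1) * ln (real n) * fact n / real (beta n R)"
    using n0 beta_pos by (simp add: xx_def qq_def field_simps)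
  also have "\<dots> \<le> 2 * (2*R+1) * ln (real n) * fact n * ((4*R)^(2*R) / real n ^ (2*R))"
  proof -
    have "1 / real (beta n R) \<le> (4*R)^(2*R) / real n ^ (2*R)"
      using beta_lower beta_pos R1 n0 by (simp add: divide_simps) (smt (verit) mult.commute)
    moreover have "2 * (2*R+1) * ln (real n) * fact n \<ge> 0" using ln_ge1 by simp
    ultimately show ?thesis by (metis (no_types, lifting) divide_inverse mult_left_mono inverse_eq_divide)
  qed
  also have "fact n / real n ^ (2*R) \<le> ?A"
    using ln_ge1 by (simp add: divide_right_mono mult_le_cancel_left1)
  finally have "real (Mf n R) \<le> 5 * (2 * (2*R+1) * ln (real n) * fact n * ((4*R)^(2*R) / real n ^ (2*R))) + ?A"
    by simp
  also have "\<dots> = CC * ?A"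
  proof -
    have g: "\<And>r B F l P. 5 * (2 * r * l * F * (B / P)) + F * l / P = (10 * r * B + 1) * (F * l / (P::real))"
      by (simp add: divide_inverse algebra_simps)
    have "real CC = 10 * (2 * real R + 1) * (4 * real R) ^ (2*R) + 1" by (simp add: CC_def)
    then show ?thesis using g[of "2 * real R + 1" "ln (real n)" "fact n" "(4 * real R) ^ (2*R)" "real n ^ (2*R)"]
      by (simp add: algebra_simps)
  qed
  finally show ?thesis .
qed

end

theorem theorem4:
  fixes R :: nat
  assumes "R \<ge> 1"
  shows "\<exists>(M :: nat \<Rightarrow> nat) (S :: nat \<Rightarrow> nat \<Rightarrow> real).
           (\<forall>n. R_covers R n (M n) (S n)) \<and>
           (\<exists>c>0. \<forall>\<^sub>F n in sequentially. fact n / real n ^ (2*R) \<le> c * real (M n)) \<and>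
           (\<exists>c>0. \<forall>\<^sub>F n in sequentially. real (M n) \<le> c * (fact n * ln (real n) / real n ^ (2*R)))"
proof -
  have A: "\<forall>n. R_covers R n (Mf n R) (Sf n R)" using covers by blast
  have B: "\<forall>\<^sub>F n in sequentially. fact n / real n ^ (2*R) \<le> 1 * real (Mf n R)"
    by (rule eventually_sequentiallyI[of "N0 R"]) (use M_lower[OF assms] in simp)
  have C: "\<forall>\<^sub>F n in sequentially. real (Mf n R) \<le> real (CC R) * (fact n * ln (real n) / real n ^ (2*R))"
    by (rule eventually_sequentiallyI[of "N0 R"]) (use M_upper[OF assms] in simp)
  have "CC R \<ge> 1" using CC_def[OF assms le_refl] by simp
  then have Cpos: "real (CC R) > 0" by simp
  have B': "\<exists>c>0. \<forall>\<^sub>F n in sequentially. fact n / real n ^ (2*R) \<le> c * real (Mf n R)"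
    using B by (intro exI[of _ 1]) simp
  have C': "\<exists>c>0. \<forall>\<^sub>F n in sequentially. real (Mf n R) \<le> c * (fact n * ln (real n) / real n ^ (2*R))"
    using C Cpos by blast
  show ?thesis
    apply (rule exI[of _ "\<lambda>n. Mf n R"])
    apply (rule exI[of _ "\<lambda>n. Sf n R"])
    using A B' C' by simp
qed


end
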